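(* Let $1\le d_1\le d_2$, $r\ge1$, $l_1,\dots,l_r\in\{1,\dots,d_1\}$ with $\sum_{j=1}^r l_j\le d_1$, and $l=d_1-\sum_{j=1}^r(l_j-1)$. Let $A\in\mathbf M_{\mathbb C}(d_1\times d_2;l_1,\dots,l_r)$ have a singular value decomposition $A=P_LDP_R^*$ with $P_L\in\mathbf U(d_1)$, $P_R\in\mathbf U(d_2)$ and $D$ a real $d_1\times d_2$ diagonal matrix, and suppose $0$ is not an eigenvalue of $AA^*$ and $AA^*$ has exactly $l$ distinct eigenvalues. Then for every $\varepsilon>0$ there is $\delta>0$ such that for every $B\in\mathbf M_{\mathbb C}(d_1\times d_2;l_1,\dots,l_r)$ with $\max_{1\le i\le d_1,1\le j\le d_2}|A_{i,j}-B_{i,j}|<\delta$, $0$ is not an eigenvalue of $BB^*$, $BB^*$ has exactly $l$ distinct eigenvalues, and there is a singular value decomposition $B=Q_LFQ_R^*$ with $Q_L\in\mathbf U(d_1)$, $Q_R\in\mathbf U(d_2)$, $F$ a real $d_1\times d_2$ diagonal matrix, such that $\max_{1\le i\le d_1}|D_{i,i}-F_{i,i}|<\varepsilon$, $\max_{1\le i,j\le d_1}|(Q_L)_{i,j}-(P_L)_{i,j}|<\varepsilon$ and $\max_{1\le i,j\le d_2}|(Q_R)_{i,j}-(P_R)_{i,j}|<\varepsilon$.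
   Context: $\mathbf U(n)$ is the group of $n\times n$ unitary matrices. A $d_1\times d_2$ matrix is diagonal if its $(i,j)$ entry vanishes for $i\ne j$. For $x\in\mathbb{C}^{d_1\times d_2}$ let $S_1(x)\le\cdots\le S_{d_1}(x)$ be its singular values (nonnegative square roots of the eigenvalues of $xx^*$). $\mathbf M_{\mathbb C}(d_1\times d_2;l_1,\dots,l_r)$ is the set of $x\in\mathbb{C}^{d_1\times d_2}$ for which there exist pairwise disjoint $J_1,\dots,J_r\subseteq\{1,\dots,d_1\}$ with $|J_j|=l_j$ such that, for each $j$, the values $S_i(x)$, $i\in J_j$, are all equal. *)

theory Defs
  imports "Jordan_Normal_Form.Matrix" "Jordan_Normal_Form.Char_Poly"
begin

definition ctrans :: "complex mat \<Rightarrow> complex mat" where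
  "ctrans x = mat (dim_col x) (dim_row x) (\<lambda>(i,j). cnj (x $$ (j,i)))"

definition unitary_mat :: "nat \<Rightarrow> complex mat set" where
  "unitary_mat n = {U. U \<in> carrier_mat n n \<and> ctrans U * U = 1\<^sub>m n \<and> U * ctrans U = 1\<^sub>m n}"

definition real_diag_mat :: "nat \<Rightarrow> nat \<Rightarrow> complex mat set" where
  "real_diag_mat d1 d2 = {D. D \<in> carrier_mat d1 d2 \<and>
     (\<forall>i<d1. \<forall>j<d2. i \<noteq> j \<longrightarrow> D $$ (i,j) = 0) \<and>
     (\<forall>i<d1. \<forall>j<d2. D $$ (i,j) \<in> \<real>)}"

text \<open>Singular values S_1 \<le> ... \<le> S_{d1} of x (0-based list): the nonnegative square roots
  of the eigenvalues of x x^*, counted with multiplicity, sorted increasingly.\<close>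
definition sing_vals :: "complex mat \<Rightarrow> real list" where
  "sing_vals x = (THE s. length s = dim_row x \<and> sorted s \<and> (\<forall>v\<in>set s. 0 \<le> v) \<and>
      char_poly (x * ctrans x) = (\<Prod>v\<leftarrow>s. [:- complex_of_real (v\<^sup>2), 1:]))"

text \<open>M_C(d1 x d2; l_1,...,l_r), with ls = [l_1,...,l_r] and 0-based indices.\<close>
definition M_C :: "nat \<Rightarrow> nat \<Rightarrow> nat list \<Rightarrow> complex mat set" where
  "M_C d1 d2 ls = {x. x \<in> carrier_mat d1 d2 \<and>
     (\<exists>J :: nat \<Rightarrow> nat set.
        (\<forall>j<length ls. J j \<subseteq> {0..<d1} \<and> card (J j) = ls ! j) \<and>
        (\<forall>j<length ls. \<forall>k<length ls. j \<noteq> k \<longrightarrow> J j \<inter> J k = {}) \<and>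
        (\<forall>j<length ls. \<forall>i\<in>J j. \<forall>i'\<in>J j. sing_vals x ! i = sing_vals x ! i'))}"

end

theory Submission
  imports Defs "HOL-Analysis.L2_Norm"
begin
definition ip :: "nat \<Rightarrow> (nat \<Rightarrow> complex) \<Rightarrow> (nat \<Rightarrow> complex) \<Rightarrow> complex" where
  "ip n x y = (\<Sum>i<n. cnj (x i) * y i)"

definition nrm :: "nat \<Rightarrow> (nat \<Rightarrow> complex) \<Rightarrow> real" where
  "nrm n x = L2_set (\<lambda>i. cmod (x i)) {..<n}"

definition mv :: "complex mat \<Rightarrow> (nat \<Rightarrow> complex) \<Rightarrow> nat \<Rightarrow> complex" where
  "mv M x = (\<lambda>i. if i < dim_row M then (\<Sum>k<dim_col M. M $$ (i,k) * x k) else 0)"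

definition colf :: "complex mat \<Rightarrow> nat \<Rightarrow> nat \<Rightarrow> complex" where
  "colf M j = (\<lambda>i. if i < dim_row M then M $$ (i,j) else 0)"

definition orthonormal :: "nat \<Rightarrow> nat \<Rightarrow> (nat \<Rightarrow> nat \<Rightarrow> complex) \<Rightarrow> bool" where
  "orthonormal n N v = (\<forall>i<N. \<forall>j<N. ip n (v i) (v j) = (if i = j then 1 else 0))"

lemma nrm_nonneg[simp]: "0 \<le> nrm n x"
  unfolding nrm_def by (rule L2_set_nonneg)

lemma nrm_sq: "(nrm n x)\<^sup>2 = (\<Sum>i<n. (cmod (x i))\<^sup>2)"
  unfolding nrm_def L2_set_def by (simp add: sum_nonneg)

lemma mult_cnj_self: "z * cnj z = (complex_of_real (cmod z))\<^sup>2"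
proof -
  have "z * cnj z = of_real ((cmod z)\<^sup>2)" by (rule complex_norm_square[symmetric])
  thus ?thesis by simp
qed
lemma cnj_mult_self: "cnj z * z = (complex_of_real (cmod z))\<^sup>2"
  using mult_cnj_self[of z] by (simp add: mult.commute)

lemma ip_self: "ip n x x = of_real ((nrm n x)\<^sup>2)"
  unfolding ip_def nrm_sq of_real_sum
  by (rule sum.cong, simp, simp add: cnj_mult_self)

lemma ip_cong: "(\<And>i. i < n \<Longrightarrow> x i = x' i) \<Longrightarrow> (\<And>i. i < n \<Longrightarrow> y i = y' i) \<Longrightarrow> ip n x y = ip n x' y'"
  unfolding ip_def by (rule sum.cong, auto)

lemma nrm_cong: "(\<And>i. i < n \<Longrightarrow> x i = x' i) \<Longrightarrow> nrm n x = nrm n x'"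
  unfolding nrm_def by (rule L2_set_cong, auto)

lemma ip_conj: "ip n y x = cnj (ip n x y)"
  unfolding ip_def by (simp add: mult.commute)

lemma coord_le_nrm: "i < n \<Longrightarrow> cmod (x i) \<le> nrm n x"
  unfolding nrm_def by (rule member_le_L2_set, auto)

lemma ip_cs: "cmod (ip n x y) \<le> nrm n x * nrm n y"
proof -
  have "cmod (ip n x y) \<le> (\<Sum>i<n. cmod (cnj (x i) * y i))" unfolding ip_def by (rule norm_sum)
  also have "\<dots> = (\<Sum>i<n. \<bar>cmod (x i)\<bar> * \<bar>cmod (y i)\<bar>)" by (simp add: norm_mult)
  also have "\<dots> \<le> nrm n x * nrm n y" unfolding nrm_def by (rule L2_set_mult_ineq)
  finally show ?thesis .
qed

lemma nrm_triangle: "nrm n (\<lambda>i. x i + y i) \<le> nrm n x + nrm n y"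
proof -
  have "nrm n (\<lambda>i. x i + y i) \<le> L2_set (\<lambda>i. cmod (x i) + cmod (y i)) {..<n}"
    unfolding nrm_def by (rule L2_set_mono, auto simp: norm_triangle_ineq)
  also have "\<dots> \<le> nrm n x + nrm n y" unfolding nrm_def by (rule L2_set_triangle_ineq)
  finally show ?thesis .
qed

lemma nrm_scale: "nrm n (\<lambda>i. c * x i) = cmod c * nrm n x"
  unfolding nrm_def by (simp add: norm_mult L2_set_right_distrib)

lemma nrm_uminus: "nrm n (\<lambda>i. - x i) = nrm n x"
  unfolding nrm_def by simp

lemma nrm_diff: "nrm n (\<lambda>i. x i - y i) \<le> nrm n x + nrm n y"
  using nrm_triangle[of n x "\<lambda>i. - y i"] nrm_uminus[of n y] by simp

lemma nrm_diff_sym: "nrm n (\<lambda>i. x i - y i) = nrm n (\<lambda>i. y i - x i)"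
  using nrm_uminus[of n "\<lambda>i. x i - y i"] by simp

lemma nrm_tri3: "nrm n (\<lambda>i. x i - z i) \<le> nrm n (\<lambda>i. x i - y i) + nrm n (\<lambda>i. y i - z i)"
  using nrm_triangle[of n "\<lambda>i. x i - y i" "\<lambda>i. y i - z i"] by simp

lemma nrm_sum: "finite S \<Longrightarrow> nrm n (\<lambda>i. \<Sum>k\<in>S. f k i) \<le> (\<Sum>k\<in>S. nrm n (f k))"
proof (induction S rule: finite_induct)
  case empty
  then show ?case unfolding nrm_def by (simp add: L2_set_0')
next
  case (insert a S)
  have "nrm n (\<lambda>i. \<Sum>k\<in>insert a S. f k i) = nrm n (\<lambda>i. f a i + (\<Sum>k\<in>S. f k i))"
    using insert by simp
  also have "\<dots> \<le> nrm n (f a) + nrm n (\<lambda>i. \<Sum>k\<in>S. f k i)" by (rule nrm_triangle)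
  also have "\<dots> \<le> nrm n (f a) + (\<Sum>k\<in>S. nrm n (f k))" using insert by simp
  finally show ?case using insert by simp
qed

lemma nrm_zero_iff: "nrm n x = 0 \<longleftrightarrow> (\<forall>i<n. x i = 0)"
  unfolding nrm_def by (subst L2_set_eq_0_iff, auto)

lemma ip_sum_right: "ip n x (\<lambda>i. \<Sum>k\<in>S. c k * y k i) = (\<Sum>k\<in>S. c k * ip n x (y k))"
  unfolding ip_def by (simp add: sum_distrib_left sum_distrib_right algebra_simps sum.swap[of _ S])

lemma ip_sum_left: "ip n (\<lambda>i. \<Sum>k\<in>S. c k * y k i) x = (\<Sum>k\<in>S. cnj (c k) * ip n (y k) x)"
  unfolding ip_def by (simp add: sum_distrib_left sum_distrib_right algebra_simps sum.swap[of _ S])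

lemma ip_add_right: "ip n x (\<lambda>i. y i + z i) = ip n x y + ip n x z"
  unfolding ip_def by (simp add: algebra_simps sum.distrib)
lemma ip_diff_right: "ip n x (\<lambda>i. y i - z i) = ip n x y - ip n x z"
  unfolding ip_def by (simp add: algebra_simps sum_subtractf)
lemma ip_diff_left: "ip n (\<lambda>i. y i - z i) x = ip n y x - ip n z x"
  unfolding ip_def by (simp add: algebra_simps sum_subtractf)
lemma ip_scale_right: "ip n x (\<lambda>i. c * y i) = c * ip n x y"
  unfolding ip_def by (simp add: algebra_simps sum_distrib_left)
lemma ip_scale_left: "ip n (\<lambda>i. c * y i) x = cnj c * ip n y x"
  unfolding ip_def by (simp add: algebra_simps sum_distrib_left)

lemma pythag:
  assumes on: "orthonormal n N v" and S: "S \<subseteq> {..<N}"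
  shows "(nrm n (\<lambda>i. \<Sum>k\<in>S. c k * v k i))\<^sup>2 = (\<Sum>k\<in>S. (cmod (c k))\<^sup>2)"
proof -
  have fin: "finite S" using S finite_subset by blast
  let ?x = "\<lambda>i. \<Sum>k\<in>S. c k * v k i"
  have "of_real ((nrm n ?x)\<^sup>2) = ip n ?x ?x" by (simp add: ip_self)
  also have "\<dots> = (\<Sum>k\<in>S. cnj (c k) * (\<Sum>l\<in>S. c l * ip n (v k) (v l)))"
    by (simp add: ip_sum_left ip_sum_right)
  also have "\<dots> = (\<Sum>k\<in>S. cnj (c k) * c k)"
  proof (rule sum.cong[OF refl])
    fix k assume k: "k \<in> S"
    have kN: "k < N" using S k by auto
    have "(\<Sum>l\<in>S. c l * ip n (v k) (v l)) = (\<Sum>l\<in>S. if l = k then c l else 0)"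
    proof (rule sum.cong[OF refl])
      fix l assume "l \<in> S"
      hence "l < N" using S by auto
      thus "c l * ip n (v k) (v l) = (if l = k then c l else 0)" using on kN unfolding orthonormal_def by auto
    qed
    also have "\<dots> = c k" using k fin by simp
    finally show "cnj (c k) * (\<Sum>l\<in>S. c l * ip n (v k) (v l)) = cnj (c k) * c k" by simp
  qed
  also have "\<dots> = of_real (\<Sum>k\<in>S. (cmod (c k))\<^sup>2)"
    unfolding of_real_sum by (rule sum.cong, simp, simp add: cnj_mult_self)
  finally show ?thesis using of_real_eq_iff by blast
qed

lemma ctrans_carrier[simp]: "ctrans M \<in> carrier_mat (dim_col M) (dim_row M)"
  unfolding ctrans_def by simp
lemma ctrans_dims[simp]: "dim_row (ctrans M) = dim_col M" "dim_col (ctrans M) = dim_row M"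
  unfolding ctrans_def by simp_all
lemma ctrans_index[simp]: "i < dim_col M \<Longrightarrow> j < dim_row M \<Longrightarrow> ctrans M $$ (i,j) = cnj (M $$ (j,i))"
  unfolding ctrans_def by simp

lemma mv_mult:
  assumes A: "A \<in> carrier_mat p q" and B: "B \<in> carrier_mat q r"
  shows "mv (A * B) x = mv A (mv B x)"
proof
  fix i
  show "mv (A * B) x i = mv A (mv B x) i"
  proof (cases "i < p")
    case True
    have "mv (A * B) x i = (\<Sum>k<r. (\<Sum>j<q. A $$ (i,j) * B $$ (j,k)) * x k)"
      using A B True unfolding mv_def
      by (simp add: scalar_prod_def row_def col_def atLeast0LessThan sum_distrib_right)
    also have "\<dots> = (\<Sum>j<q. A $$ (i,j) * (\<Sum>k<r. B $$ (j,k) * x k))"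
      by (simp add: sum_distrib_left sum_distrib_right algebra_simps sum.swap[of _ "{..<r}"])
    also have "\<dots> = mv A (mv B x) i" using A B True unfolding mv_def by simp
    finally show ?thesis .
  next
    case False
    then show ?thesis using A B unfolding mv_def by simp
  qed
qed

lemma mv_adj:
  assumes M: "M \<in> carrier_mat p q"
  shows "ip p (mv M x) y = ip q x (mv (ctrans M) y)"
proof -
  have "ip p (mv M x) y = (\<Sum>i<p. \<Sum>k<q. cnj (M $$ (i,k)) * cnj (x k) * y i)"
    using M unfolding ip_def mv_def by (simp add: sum_distrib_right)
  also have "\<dots> = (\<Sum>k<q. \<Sum>i<p. cnj (M $$ (i,k)) * cnj (x k) * y i)" by (rule sum.swap)
  also have "\<dots> = ip q x (mv (ctrans M) y)"
    using M unfolding ip_def mv_def by (simp add: sum_distrib_left algebra_simps)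
  finally show ?thesis .
qed

lemma mv_cong: "(\<And>k. k < dim_col M \<Longrightarrow> x k = y k) \<Longrightarrow> mv M x = mv M y"
  unfolding mv_def by (intro ext, auto intro: sum.cong)

lemma mv_sum: "finite S \<Longrightarrow> mv M (\<lambda>k. \<Sum>j\<in>S. c j * v j k) = (\<lambda>i. \<Sum>j\<in>S. c j * mv M (v j) i)"
  unfolding mv_def by (intro ext, auto simp: sum_distrib_left algebra_simps intro: sum.swap)

lemma mv_scale: "mv M (\<lambda>k. c * x k) = (\<lambda>i. c * mv M x i)"
  unfolding mv_def by (intro ext, auto simp: sum_distrib_left algebra_simps)

lemma mv_diff: "mv M (\<lambda>k. x k - y k) = (\<lambda>i. mv M x i - mv M y i)"
  unfolding mv_def by (intro ext, auto simp: algebra_simps sum_subtractf)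

lemma mv_add: "mv M (\<lambda>k. x k + y k) = (\<lambda>i. mv M x i + mv M y i)"
  unfolding mv_def by (intro ext, auto simp: algebra_simps sum.distrib)

lemma mv_mat_diff:
  assumes "A \<in> carrier_mat p q" "B \<in> carrier_mat p q"
  shows "mv (A - B) x = (\<lambda>i. mv A x i - mv B x i)"
  using assms unfolding mv_def by (intro ext, auto simp: algebra_simps sum_subtractf)

lemma mv_bound:
  assumes M: "M \<in> carrier_mat p q" and c: "\<And>i k. i < p \<Longrightarrow> k < q \<Longrightarrow> cmod (M $$ (i,k)) \<le> c"
  shows "nrm p (mv M x) \<le> c * (real p * real q) * nrm q x"
proof -
  have c0: "0 \<le> c" if "p > 0" "q > 0"
  proof -
    have "cmod (M $$ (0,0)) \<le> c" using c that by simp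
    moreover have "0 \<le> cmod (M $$ (0,0))" by simp
    ultimately show ?thesis by linarith
  qed
  have row: "(cmod (mv M x i))\<^sup>2 \<le> c\<^sup>2 * real q * (nrm q x)\<^sup>2" if i: "i < p" for i
  proof -
    have "cmod (mv M x i) \<le> (\<Sum>k<q. cmod (M $$ (i,k)) * cmod (x k))"
      using M i unfolding mv_def by (simp add: norm_sum[THEN order_trans] norm_mult)
    also have "\<dots> \<le> (\<Sum>k<q. \<bar>c\<bar> * \<bar>cmod (x k)\<bar>)"
      proof (rule sum_mono)
      fix k assume "k \<in> {..<q}"
      hence "cmod (M $$ (i,k)) \<le> \<bar>c\<bar>" using c[of i k] i abs_ge_self[of c] by auto
      thus "cmod (M $$ (i,k)) * cmod (x k) \<le> \<bar>c\<bar> * \<bar>cmod (x k)\<bar>" by (simp add: mult_right_mono)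
    qed
    also have "\<dots> \<le> L2_set (\<lambda>k. c) {..<q} * nrm q x"
      unfolding nrm_def by (rule L2_set_mult_ineq)
    also have "\<dots> = sqrt (real q) * \<bar>c\<bar> * nrm q x" by (simp add: L2_set_constant)
    finally have le: "cmod (mv M x i) \<le> sqrt (real q) * \<bar>c\<bar> * nrm q x" .
    have "(cmod (mv M x i))\<^sup>2 \<le> (sqrt (real q) * \<bar>c\<bar> * nrm q x)\<^sup>2"
      by (rule power_mono[OF le], simp)
    also have "\<dots> = c\<^sup>2 * real q * (nrm q x)\<^sup>2" by (simp add: power_mult_distrib)
    finally show ?thesis .
  qed
  have "(nrm p (mv M x))\<^sup>2 = (\<Sum>i<p. (cmod (mv M x i))\<^sup>2)" by (rule nrm_sq)
  also have "\<dots> \<le> (\<Sum>i<p. c\<^sup>2 * real q * (nrm q x)\<^sup>2)"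
    by (rule sum_mono, rule row, simp)
  also have "\<dots> = (real p * real q) * (c\<^sup>2 * (nrm q x)\<^sup>2)" by (simp add: algebra_simps)
  also have "\<dots> \<le> (real p * real q)\<^sup>2 * (c\<^sup>2 * (nrm q x)\<^sup>2)"
  proof (rule mult_right_mono)
    have "real (p * q) \<le> (real (p * q))\<^sup>2"
    proof (cases "p * q = 0")
      case False
      hence "1 \<le> p * q" by simp
      hence t1: "1 \<le> real (p * q)" by linarith
      have "real (p * q) * 1 \<le> real (p * q) * real (p * q)"
        by (rule mult_left_mono[OF t1], simp)
      thus ?thesis by (simp add: power2_eq_square)
    qed auto
    thus "real p * real q \<le> (real p * real q)\<^sup>2" by simp
  qed simp
  also have "\<dots> = (c * (real p * real q) * nrm q x)\<^sup>2" by (simp add: power_mult_distrib)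
  finally have sq: "(nrm p (mv M x))\<^sup>2 \<le> (c * (real p * real q) * nrm q x)\<^sup>2" .
  have "0 \<le> c * (real p * real q) * nrm q x"
  proof (cases "p > 0 \<and> q > 0")
    case True thus ?thesis using c0 by simp
  qed auto
  from power2_le_imp_le[OF sq this] show ?thesis .
qed

lemma colf_mult_ip:
  assumes A: "A \<in> carrier_mat n p" and B: "B \<in> carrier_mat n q" and i: "i < p" and j: "j < q"
  shows "(ctrans A * B) $$ (i,j) = ip n (colf A i) (colf B j)"
  using A B i j unfolding ip_def colf_def
  by (simp add: scalar_prod_def row_def col_def atLeast0LessThan)

lemma unitary_orthonormal:
  assumes "U \<in> unitary_mat n" shows "orthonormal n n (colf U)"
  unfolding orthonormal_def
proof (intro allI impI)
  fix i j assume i: "i < n" and j: "j < n"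
  have U: "U \<in> carrier_mat n n" using assms unfolding unitary_mat_def by auto
  have "ip n (colf U i) (colf U j) = (ctrans U * U) $$ (i,j)" using colf_mult_ip[OF U U i j] by simp
  also have "\<dots> = (if i = j then 1 else 0)" using assms i j unfolding unitary_mat_def by auto
  finally show "ip n (colf U i) (colf U j) = (if i = j then 1 else 0)" .
qed

definition matf :: "nat \<Rightarrow> nat \<Rightarrow> (nat \<Rightarrow> nat \<Rightarrow> complex) \<Rightarrow> complex mat" where
  "matf n N v = mat n N (\<lambda>(i,j). v j i)"

lemma matf_carrier[simp]: "matf n N v \<in> carrier_mat n N" unfolding matf_def by simp
lemma matf_dims[simp]: "dim_row (matf n N v) = n" "dim_col (matf n N v) = N" unfolding matf_def by simp_all
lemma matf_index[simp]: "i < n \<Longrightarrow> j < N \<Longrightarrow> matf n N v $$ (i,j) = v j i" unfolding matf_def by simp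
lemma colf_matf: "i < n \<Longrightarrow> j < N \<Longrightarrow> colf (matf n N v) j i = v j i" unfolding colf_def by simp

lemma orthonormal_unitary:
  assumes on: "orthonormal n n v" shows "matf n n v \<in> unitary_mat n"
proof -
  let ?U = "matf n n v"
  have U: "?U \<in> carrier_mat n n" by simp
  have h1: "ctrans ?U * ?U = 1\<^sub>m n"
  proof (rule eq_matI)
    fix i j assume i0: "i < dim_row (1\<^sub>m n)" and j0: "j < dim_col (1\<^sub>m n)"
    have i: "i < n" and j: "j < n" using i0 j0 by auto
    hence "(ctrans ?U * ?U) $$ (i,j) = ip n (colf ?U i) (colf ?U j)" using colf_mult_ip[OF U U] by simp
    also have "\<dots> = ip n (v i) (v j)" using i j by (intro ip_cong, auto simp: colf_matf)
    also have "\<dots> = 1\<^sub>m n $$ (i,j)" using on i j unfolding orthonormal_def by simp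
    finally show "(ctrans ?U * ?U) $$ (i,j) = 1\<^sub>m n $$ (i,j)" .
  qed auto
  have h2: "?U * ctrans ?U = 1\<^sub>m n"
    proof -
    have "ctrans ?U \<in> carrier_mat n n" using ctrans_carrier[of ?U] by simp
    from mat_mult_left_right_inverse[OF this U h1] show ?thesis .
  qed
  show ?thesis unfolding unitary_mat_def using h1 h2 by simp
qed

lemma expansion:
  assumes on: "orthonormal n n v" and i: "i < n"
  shows "z i = (\<Sum>k<n. ip n (v k) z * v k i)"
proof -
  let ?U = "matf n n v"
  have "?U * ctrans ?U = 1\<^sub>m n" using orthonormal_unitary[OF on] unfolding unitary_mat_def by auto
  hence e: "(?U * ctrans ?U) $$ (i,l) = (if i = l then 1 else 0)" if "l < n" for l
    using i that by simp
  have e2: "(\<Sum>k<n. v k i * cnj (v k l)) = (if i = l then 1 else 0)" if l: "l < n" for l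
    using e[OF l] i l by (simp add: scalar_prod_def row_def col_def atLeast0LessThan)
  have "(\<Sum>k<n. ip n (v k) z * v k i) = (\<Sum>k<n. \<Sum>l<n. cnj (v k l) * z l * v k i)"
    unfolding ip_def by (simp add: sum_distrib_right)
  also have "\<dots> = (\<Sum>l<n. z l * (\<Sum>k<n. v k i * cnj (v k l)))"
    by (subst sum.swap, simp add: sum_distrib_left algebra_simps)
  also have "\<dots> = (\<Sum>l<n. if l = i then z l else 0)"
    by (rule sum.cong, simp, simp add: e2)
  also have "\<dots> = z i" using i by simp
  finally show ?thesis by simp
qed

lemma ip_orth_expansion:
  assumes on: "orthonormal n N v" and j: "j < N" and S: "S \<subseteq> {..<N}"
  shows "ip n (v j) (\<lambda>i. \<Sum>k\<in>S. c k * v k i) = (if j \<in> S then c j else 0)"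
proof -
  have fin: "finite S" using S finite_subset by blast
  have "ip n (v j) (\<lambda>i. \<Sum>k\<in>S. c k * v k i) = (\<Sum>k\<in>S. c k * ip n (v j) (v k))" by (rule ip_sum_right)
  also have "\<dots> = (\<Sum>k\<in>S. if k = j then c k else 0)"
    by (rule sum.cong, simp, insert on S j, auto simp: orthonormal_def)
  also have "\<dots> = (if j \<in> S then c j else 0)" using fin by simp
  finally show ?thesis .
qed

definition eig :: "complex mat \<Rightarrow> complex \<Rightarrow> (nat \<Rightarrow> complex) \<Rightarrow> bool" where
  "eig H a x = (\<forall>i<dim_row H. mv H x i = a * x i)"

lemma herm_ip:
  assumes H: "H \<in> carrier_mat n n" and herm: "ctrans H = H"
  shows "ip n (mv H x) y = ip n x (mv H y)"
  using mv_adj[OF H, of x y] herm by simp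

lemma eig_ip_left:
  assumes H: "H \<in> carrier_mat n n" and e: "eig H a x"
  shows "ip n (mv H x) y = cnj a * ip n x y"
proof -
  have "ip n (mv H x) y = ip n (\<lambda>i. a * x i) y" using e H unfolding eig_def by (intro ip_cong, auto)
  thus ?thesis by (simp add: ip_scale_left)
qed

lemma eig_ip_right:
  assumes H: "H \<in> carrier_mat n n" and e: "eig H a x"
  shows "ip n y (mv H x) = a * ip n y x"
proof -
  have "ip n y (mv H x) = ip n y (\<lambda>i. a * x i)" using e H unfolding eig_def by (intro ip_cong, auto)
  thus ?thesis by (simp add: ip_scale_right)
qed

lemma eig_real:
  assumes H: "H \<in> carrier_mat n n" and herm: "ctrans H = H" and e: "eig H a x" and x: "nrm n x \<noteq> 0"
  shows "cnj a = a"
proof -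
  have "cnj a * ip n x x = ip n (mv H x) x" using eig_ip_left[OF H e, of x] by simp
  also have "\<dots> = ip n x (mv H x)" by (rule herm_ip[OF H herm])
  also have "\<dots> = a * ip n x x" by (rule eig_ip_right[OF H e])
  finally have e1: "cnj a * ip n x x = a * ip n x x" .
  have "ip n x x \<noteq> 0" using x by (simp add: ip_self)
  thus ?thesis using e1 by simp
qed

lemma eig_orth:
  assumes H: "H \<in> carrier_mat n n" and herm: "ctrans H = H" and ex: "eig H a x" and ey: "eig H b y"
    and a: "cnj a = a" and ab: "a \<noteq> b"
  shows "ip n x y = 0"
proof -
  have "cnj a * ip n x y = ip n (mv H x) y" using eig_ip_left[OF H ex, of y] by simp
  also have "\<dots> = ip n x (mv H y)" by (rule herm_ip[OF H herm])
  also have "\<dots> = b * ip n x y" by (rule eig_ip_right[OF H ey])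
  finally have e1: "cnj a * ip n x y = b * ip n x y" .
  have "(cnj a - b) * ip n x y = 0" using e1 by (simp add: algebra_simps)
  moreover have "cnj a - b \<noteq> 0" using a ab by simp
  ultimately show ?thesis by simp
qed

lemma eig_sum:
  assumes "finite S" "\<And>j. j \<in> S \<Longrightarrow> eig H a (v j)"
  shows "eig H a (\<lambda>i. \<Sum>j\<in>S. c j * v j i)"
  using assms unfolding eig_def by (simp add: mv_sum sum_distrib_left algebra_simps)

lemma eig_scale: "eig H a x \<Longrightarrow> eig H a (\<lambda>i. c * x i)"
  unfolding eig_def by (simp add: mv_scale)

lemma eig_diff: "eig H a x \<Longrightarrow> eig H a y \<Longrightarrow> eig H a (\<lambda>i. x i - y i)"
  unfolding eig_def by (simp add: mv_diff algebra_simps)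

lemma eig_zero: "eig H a (\<lambda>i. 0)"
  unfolding eig_def mv_def by simp

lemma sum_split_at: "(\<Sum>c<(k::nat) + r. f c) = (\<Sum>c<k. f c) + (\<Sum>c<r. f (k + c))"
  by (induction r, auto simp: add.assoc)

lemma nrm_normalize: "nrm n x \<noteq> 0 \<Longrightarrow> nrm n (\<lambda>i. complex_of_real (1 / nrm n x) * x i) = 1"
proof -
  assume nz: "nrm n x \<noteq> 0"
  have "nrm n (\<lambda>i. complex_of_real (1 / nrm n x) * x i) = cmod (complex_of_real (1 / nrm n x)) * nrm n x"
    by (rule nrm_scale)
  also have "cmod (complex_of_real (1 / nrm n x)) = 1 / nrm n x" by (simp only: norm_of_real, simp)
  finally show ?thesis using nz by simp
qed

lemma extend_one:
  assumes on: "orthonormal n k v" and kn: "k < n"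
  shows "\<exists>x. nrm n x = 1 \<and> (\<forall>i<k. ip n (v i) x = 0)"
proof -
  define e where "e j = (\<lambda>i::nat. if i = j then (1::complex) else 0)" for j :: nat
  define z where "z j = (\<lambda>i. e j i - (\<Sum>l<k. ip n (v l) (e j) * v l i))" for j
  have orth: "ip n (v i) (z j) = 0" if i: "i < k" for i j
  proof -
    have "ip n (v i) (z j) = ip n (v i) (e j) - ip n (v i) (\<lambda>t. \<Sum>l<k. ip n (v l) (e j) * v l t)"
      unfolding z_def by (rule ip_diff_right)
    also have "ip n (v i) (\<lambda>t. \<Sum>l<k. ip n (v l) (e j) * v l t) = ip n (v i) (e j)"
      using ip_orth_expansion[OF on i, of "{..<k}"] i by simp
    finally show ?thesis by simp
  qed
  have "\<exists>j<n. nrm n (z j) \<noteq> 0"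
  proof (rule ccontr)
    assume "\<not> ?thesis"
    hence zz: "z j i = 0" if "j < n" "i < n" for i j using that nrm_zero_iff by blast
    have one: "(\<Sum>l<k. (cmod (v l j))\<^sup>2) = 1" if j: "j < n" for j
    proof -
      have "ip n (v l) (e j) = cnj (v l j)" for l
        unfolding ip_def e_def using j by (simp add: if_distrib cong: if_cong)
      hence "e j j = (\<Sum>l<k. cnj (v l j) * v l j)" using zz[OF j j] unfolding z_def by simp
      hence "(1::complex) = (\<Sum>l<k. of_real ((cmod (v l j))\<^sup>2))" unfolding e_def
        by (simp add: cnj_mult_self)
      hence "complex_of_real (\<Sum>l<k. (cmod (v l j))\<^sup>2) = 1" by (simp only: of_real_sum eq_commute)
      thus ?thesis by (simp only: of_real_eq_1_iff)
    qed
    have "real n = (\<Sum>j<n. \<Sum>l<k. (cmod (v l j))\<^sup>2)" using one by simp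
    also have "\<dots> = (\<Sum>l<k. \<Sum>j<n. (cmod (v l j))\<^sup>2)" by (rule sum.swap)
    also have "\<dots> = (\<Sum>l<k. 1)"
    proof (rule sum.cong[OF refl])
      fix l assume "l \<in> {..<k}"
      hence "ip n (v l) (v l) = 1" using on unfolding orthonormal_def by auto
      hence "complex_of_real ((nrm n (v l))\<^sup>2) = 1" by (simp only: ip_self)
      hence "(nrm n (v l))\<^sup>2 = 1" by (simp only: of_real_eq_1_iff)
      thus "(\<Sum>j<n. (cmod (v l j))\<^sup>2) = 1" by (simp add: nrm_sq)
    qed
    also have "\<dots> = real k" by simp
    finally show False using kn by simp
  qed
  then obtain j where j: "j < n" and nz: "nrm n (z j) \<noteq> 0" by auto
  define x where "x = (\<lambda>i. complex_of_real (1 / nrm n (z j)) * z j i)"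
  have "nrm n x = 1" unfolding x_def using nrm_normalize[OF nz] .
  moreover have "ip n (v i) x = 0" if "i < k" for i unfolding x_def ip_scale_right using orth[OF that] by simp
  ultimately show ?thesis by auto
qed

lemma complete_basis:
  assumes on: "orthonormal n k v" and kn: "k \<le> n"
  shows "\<exists>w. orthonormal n n w \<and> (\<forall>i<k. w i = v i)"
proof -
  have "\<forall>k'. k \<le> k' \<and> k' \<le> n \<longrightarrow> (\<exists>w. orthonormal n k' w \<and> (\<forall>i<k. w i = v i))"
  proof
    fix k'
    show "k \<le> k' \<and> k' \<le> n \<longrightarrow> (\<exists>w. orthonormal n k' w \<and> (\<forall>i<k. w i = v i))"
    proof (induction k')
      case 0
      then show ?case using on by auto
    next
      case (Suc k')
      show ?case
      proof
        assume a: "k \<le> Suc k' \<and> Suc k' \<le> n"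
        show "\<exists>w. orthonormal n (Suc k') w \<and> (\<forall>i<k. w i = v i)"
        proof (cases "k = Suc k'")
          case True thus ?thesis using on by auto
        next
          case False
          with a Suc.IH obtain w where w: "orthonormal n k' w" and wv: "\<forall>i<k. w i = v i" by auto
          from extend_one[OF w] a obtain x where x: "nrm n x = 1" "\<forall>i<k'. ip n (w i) x = 0" by auto
          define w' where "w' = w(k' := x)"
          have "orthonormal n (Suc k') w'"
            unfolding orthonormal_def
          proof (intro allI impI)
            fix i j assume i: "i < Suc k'" and j: "j < Suc k'"
            show "ip n (w' i) (w' j) = (if i = j then 1 else 0)"
            proof (cases "i = k'"; cases "j = k'")
              assume "i = k'" "j = k'" thus ?thesis unfolding w'_def using x by (simp add: ip_self)
            next
              assume "i = k'" "j \<noteq> k'" thus ?thesis unfolding w'_def using x j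
                by (subst ip_conj, simp)
            next
              assume "i \<noteq> k'" "j = k'" thus ?thesis unfolding w'_def using x i by simp
            next
              assume "i \<noteq> k'" "j \<noteq> k'" thus ?thesis unfolding w'_def using w i j
                unfolding orthonormal_def by simp
            qed
          qed
          moreover have "\<forall>i<k. w' i = v i" using wv False a unfolding w'_def by auto
          ultimately show ?thesis by blast
        qed
      qed
    qed
  qed
  thus ?thesis using kn by auto
qed

lemma eig_in_complement:
  assumes H: "H \<in> carrier_mat n n" and herm: "ctrans H = H"
    and on: "orthonormal n k v" and ev: "\<forall>i<k. eig H (lam i) (v i)" and kn: "k < n"
  shows "\<exists>x a. nrm n x = 1 \<and> (\<forall>i<k. ip n (v i) x = 0) \<and> eig H a x"
proof -
  obtain w where w: "orthonormal n n w" and wv: "\<forall>i<k. w i = v i"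
    using complete_basis[OF on] kn by auto
  define r where "r = n - k"
  have nkr: "n = k + r" using kn unfolding r_def by simp
  define M where "M = mat r r (\<lambda>(a,b). ip n (w (k+a)) (mv H (w (k+b))))"
  have M: "M \<in> carrier_mat r r" unfolding M_def by simp
  obtain as where cp: "char_poly M = (\<Prod>a\<leftarrow>as. [:- a, 1:])" using char_poly_factorized[OF M] by auto
  have "degree (char_poly M) = r" using degree_monic_char_poly[OF M] by simp
  moreover have "r > 0" using kn unfolding r_def by simp
  ultimately have "as \<noteq> []" using cp by auto
  then obtain a0 as' where as: "as = a0 # as'" by (cases as, auto)
  have "poly (char_poly M) a0 = 0" unfolding cp as by simp
  hence "eigenvalue M a0" using eigenvalue_root_char_poly[OF M] by simp
  then obtain yv where yv: "yv \<in> carrier_vec r" "yv \<noteq> 0\<^sub>v r" "M *\<^sub>v yv = a0 \<cdot>\<^sub>v yv"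
    unfolding eigenvalue_def eigenvector_def using M by auto
  define y where "y b = yv $ b" for b
  have "\<exists>b<r. y b \<noteq> 0"
  proof (rule ccontr)
    assume "\<not> ?thesis"
    hence "yv = 0\<^sub>v r" using yv(1) unfolding y_def by (intro eq_vecI, auto)
    thus False using yv(2) by simp
  qed
  then obtain b0 where b0: "b0 < r" "y b0 \<noteq> 0" by auto
  define x where "x = (\<lambda>i. \<Sum>b<r. y b * w (k + b) i)"
  have wbig: "orthonormal n n w" by fact
  have ipx: "ip n (w j) x = (if j \<in> (\<lambda>b. k + b) ` {..<r} then y (j - k) else 0)" if j: "j < n" for j
  proof -
    have "x = (\<lambda>i. \<Sum>c\<in>(\<lambda>b. k + b) ` {..<r}. y (c - k) * w c i)"
      unfolding x_def by (intro ext, subst sum.reindex, auto simp: inj_on_def)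
    hence "ip n (w j) x = ip n (w j) (\<lambda>i. \<Sum>c\<in>(\<lambda>b. k + b) ` {..<r}. y (c - k) * w c i)" by simp
    also have "\<dots> = (if j \<in> (\<lambda>b. k + b) ` {..<r} then y (j - k) else 0)"
      by (rule ip_orth_expansion[OF w j], auto simp: nkr)
    finally show ?thesis .
  qed
  have orthx: "ip n (v i) x = 0" if i: "i < k" for i
    using ipx[of i] i kn wv by auto
  have nzx: "nrm n x \<noteq> 0"
  proof
    assume "nrm n x = 0"
    hence "\<forall>i<n. x i = 0" using nrm_zero_iff by blast
    hence "ip n (w (k + b0)) x = 0" unfolding ip_def by simp
    moreover have "ip n (w (k + b0)) x = y b0" using ipx[of "k + b0"] b0 nkr by auto
    ultimately show False using b0 by simp
  qed
  have Hw: "mv H (w (k + b)) i = (\<Sum>c<r. M $$ (c, b) * w (k + c) i)" if b: "b < r" and i: "i < n" for b i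
  proof -
    let ?z = "mv H (w (k + b))"
    have "?z i = (\<Sum>c<n. ip n (w c) ?z * w c i)" by (rule expansion[OF w i])
    also have "\<dots> = (\<Sum>c<k. ip n (w c) ?z * w c i) + (\<Sum>c<r. ip n (w (k + c)) ?z * w (k + c) i)"
      unfolding nkr by (rule sum_split_at)
    also have "(\<Sum>c<k. ip n (w c) ?z * w c i) = 0"
    proof (rule sum.neutral, intro ballI)
      fix c assume c: "c \<in> {..<k}"
      have "ip n (w c) ?z = ip n (mv H (w c)) (w (k + b))" using herm_ip[OF H herm] by simp
      also have "\<dots> = cnj (lam c) * ip n (w c) (w (k + b))"
        using eig_ip_left[OF H, of "lam c" "w c"] ev wv c by auto
      also have "ip n (w c) (w (k + b)) = 0" using w c b nkr unfolding orthonormal_def by auto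
      finally show "ip n (w c) ?z * w c i = 0" by simp
    qed
    also have "(\<Sum>c<r. ip n (w (k + c)) ?z * w (k + c) i) = (\<Sum>c<r. M $$ (c, b) * w (k + c) i)"
      by (rule sum.cong, auto simp: M_def b)
    finally show ?thesis by simp
  qed
  have eigx: "eig H a0 x"
    unfolding eig_def
  proof (intro allI impI)
    fix i assume "i < dim_row H"
    hence i: "i < n" using H by simp
    have "mv H x i = (\<Sum>b<r. y b * mv H (w (k + b)) i)"
      unfolding x_def mv_sum[OF finite_lessThan] by simp
    also have "\<dots> = (\<Sum>b<r. y b * (\<Sum>c<r. M $$ (c, b) * w (k + c) i))"
      by (rule sum.cong, auto simp: Hw i)
    also have "\<dots> = (\<Sum>b<r. \<Sum>c<r. M $$ (c, b) * y b * w (k + c) i)"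
      by (simp add: sum_distrib_left algebra_simps)
    also have "\<dots> = (\<Sum>c<r. \<Sum>b<r. M $$ (c, b) * y b * w (k + c) i)"
      by (rule sum.swap)
    also have "\<dots> = (\<Sum>c<r. (\<Sum>b<r. M $$ (c, b) * y b) * w (k + c) i)"
      by (simp add: sum_distrib_right)
    also have "\<dots> = (\<Sum>c<r. (a0 * y c) * w (k + c) i)"
    proof (rule sum.cong[OF refl])
      fix c assume c: "c \<in> {..<r}"
      have "(M *\<^sub>v yv) $ c = row M c \<bullet> yv" using M c by simp
      also have "\<dots> = (\<Sum>b<r. M $$ (c, b) * y b)"
        using M yv c unfolding y_def scalar_prod_def by (simp add: atLeast0LessThan)
      finally have "(M *\<^sub>v yv) $ c = (\<Sum>b<r. M $$ (c, b) * y b)" .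
      moreover have "(M *\<^sub>v yv) $ c = a0 * y c" using yv c M unfolding y_def by simp
      ultimately show "(\<Sum>b<r. M $$ (c, b) * y b) * w (k + c) i = (a0 * y c) * w (k + c) i" by simp
    qed
    also have "\<dots> = a0 * x i" unfolding x_def by (simp add: sum_distrib_left algebra_simps)
    finally show "mv H x i = a0 * x i" .
  qed
  define x' where "x' = (\<lambda>i. complex_of_real (1 / nrm n x) * x i)"
  have "nrm n x' = 1" unfolding x'_def using nrm_normalize[OF nzx] .
  moreover have "\<forall>i<k. ip n (v i) x' = 0" unfolding x'_def ip_scale_right using orthx by simp
  moreover have "eig H a0 x'" unfolding x'_def by (rule eig_scale[OF eigx])
  ultimately show ?thesis by blast
qed

lemma spectral:
  assumes H: "H \<in> carrier_mat n n" and herm: "ctrans H = H"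
  shows "\<exists>v lam. orthonormal n n v \<and> (\<forall>k<n. eig H (complex_of_real (lam k)) (v k))"
proof -
  have "\<forall>k. k \<le> n \<longrightarrow> (\<exists>v lam. orthonormal n k v \<and> (\<forall>j<k. eig H (lam j) (v j)))"
  proof
    fix k show "k \<le> n \<longrightarrow> (\<exists>v lam. orthonormal n k v \<and> (\<forall>j<k. eig H (lam j) (v j)))"
    proof (induction k)
      case 0 thus ?case by (auto simp: orthonormal_def)
    next
      case (Suc k)
      show ?case
      proof
        assume a: "Suc k \<le> n"
        with Suc.IH obtain v lam where on: "orthonormal n k v" and ev: "\<forall>j<k. eig H (lam j) (v j)" by auto
        from eig_in_complement[OF H herm on ev] a obtain x a0 where
          x: "nrm n x = 1" "\<forall>i<k. ip n (v i) x = 0" "eig H a0 x" by auto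
        define v' where "v' = v(k := x)"
        define lam' where "lam' = lam(k := a0)"
        have "orthonormal n (Suc k) v'"
          unfolding orthonormal_def
        proof (intro allI impI)
          fix i j assume i: "i < Suc k" and j: "j < Suc k"
          show "ip n (v' i) (v' j) = (if i = j then 1 else 0)"
          proof (cases "i = k"; cases "j = k")
            assume "i = k" "j = k" thus ?thesis unfolding v'_def using x by (simp add: ip_self)
          next
            assume "i = k" "j \<noteq> k" thus ?thesis unfolding v'_def using x j
              by (subst ip_conj, simp)
          next
            assume "i \<noteq> k" "j = k" thus ?thesis unfolding v'_def using x i by simp
          next
            assume "i \<noteq> k" "j \<noteq> k" thus ?thesis unfolding v'_def using on i j
              unfolding orthonormal_def by simp
          qed
        qed
        moreover have "\<forall>j<Suc k. eig H (lam' j) (v' j)"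
          using ev x unfolding v'_def lam'_def by (auto simp: less_Suc_eq)
        ultimately show "\<exists>v lam. orthonormal n (Suc k) v \<and> (\<forall>j<Suc k. eig H (lam j) (v j))" by blast
      qed
    qed
  qed
  then obtain v lam where on: "orthonormal n n v" and ev: "\<forall>j<n. eig H (lam j) (v j)" by blast
  have "\<forall>j<n. eig H (complex_of_real (Re (lam j))) (v j)"
  proof (intro allI impI)
    fix j assume j: "j < n"
    have "ip n (v j) (v j) = 1" using on j unfolding orthonormal_def by simp
    hence "nrm n (v j) \<noteq> 0" by (auto simp: ip_self)
    hence cj: "cnj (lam j) = lam j" using eig_real[OF H herm] ev j by blast
    have "Im (lam j) = 0" using arg_cong[OF cj, of Im] by simp
    hence "complex_of_real (Re (lam j)) = lam j" by (simp add: complex_eq_iff)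
    thus "eig H (complex_of_real (Re (lam j))) (v j)" using ev j by simp
  qed
  thus ?thesis using on by (intro exI[of _ v] exI[of _ "\<lambda>j. Re (lam j)"], auto)
qed

lemma nrm_one: "ip d x x = 1 \<Longrightarrow> nrm d x = 1"
proof -
  assume "ip d x x = 1"
  hence "complex_of_real ((nrm d x)\<^sup>2) = 1" by (simp only: ip_self)
  hence "(nrm d x)\<^sup>2 = 1" by (simp only: of_real_eq_1_iff)
  hence "nrm d x = 1 \<or> nrm d x = -1" by (simp add: power2_eq_1_iff)
  thus ?thesis using nrm_nonneg[of d x] by linarith
qed

lemma nrm_rev_tri: "nrm n x \<le> nrm n y + nrm n (\<lambda>i. x i - y i)"
  using nrm_triangle[of n y "\<lambda>i. x i - y i"] by simp

lemma normalize_close: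
  assumes u: "nrm n u = 1" and zu: "nrm n (\<lambda>i. z i - u i) \<le> \<rho>" and r: "\<rho> \<le> 1/2"
  shows "nrm n z \<noteq> 0" "nrm n (\<lambda>i. complex_of_real (1 / nrm n z) * z i - u i) \<le> 2 * \<rho>"
proof -
  have l1: "nrm n u \<le> nrm n z + nrm n (\<lambda>i. u i - z i)" by (rule nrm_rev_tri)
  have l2: "nrm n z \<le> nrm n u + nrm n (\<lambda>i. z i - u i)" by (rule nrm_rev_tri)
  have sym: "nrm n (\<lambda>i. u i - z i) = nrm n (\<lambda>i. z i - u i)" by (rule nrm_diff_sym)
  have zpos: "nrm n z \<ge> 1/2" using l1 sym u zu r by linarith
  thus "nrm n z \<noteq> 0" by auto
  let ?t = "nrm n z"
  have tp: "?t > 0" using zpos by simp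
  have e1: "nrm n (\<lambda>i. complex_of_real (1 / ?t) * z i - z i) = nrm n (\<lambda>i. complex_of_real (1 / ?t - 1) * z i)"
    by (rule nrm_cong, simp add: algebra_simps)
  have e2: "nrm n (\<lambda>i. complex_of_real (1 / ?t - 1) * z i) = \<bar>1 / ?t - 1\<bar> * ?t" by (simp only: nrm_scale norm_of_real)
  have e3: "\<bar>1 / ?t - 1\<bar> * ?t = \<bar>(1 / ?t - 1) * ?t\<bar>" using tp by (simp add: abs_mult)
  have e4: "(1 / ?t - 1) * ?t = 1 - ?t" using tp by (simp add: field_simps)
  have e5: "\<bar>1 - ?t\<bar> \<le> \<rho>" using l1 l2 sym u zu by linarith
  have a: "nrm n (\<lambda>i. complex_of_real (1 / ?t) * z i - z i) \<le> \<rho>" using e1 e2 e3 e4 e5 by simp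
  have "nrm n (\<lambda>i. complex_of_real (1 / ?t) * z i - u i)
     \<le> nrm n (\<lambda>i. complex_of_real (1 / ?t) * z i - z i) + nrm n (\<lambda>i. z i - u i)" by (rule nrm_tri3)
  thus "nrm n (\<lambda>i. complex_of_real (1 / ?t) * z i - u i) \<le> 2 * \<rho>" using a zu by linarith
qed

lemma E_sum:
  assumes zero: "\<forall>b. E b (\<lambda>i. 0)" and add: "\<forall>b x y. E b x \<longrightarrow> E b y \<longrightarrow> E b (\<lambda>i. x i + y i)"
  shows "finite S \<Longrightarrow> (\<And>l. l \<in> S \<Longrightarrow> E b (f l)) \<Longrightarrow> E b (\<lambda>i. \<Sum>l\<in>S. f l i)"
proof (induction S rule: finite_induct)
  case empty thus ?case using zero by simp
next
  case (insert a S)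
  have "E b (\<lambda>i. f a i + (\<Sum>l\<in>S. f l i))" using add insert by auto
  thus ?case using insert by simp
qed

lemma orthonormal_mono: "orthonormal d N q \<Longrightarrow> k \<le> N \<Longrightarrow> orthonormal d k q"
  unfolding orthonormal_def by auto

definition gs_prop :: "real \<Rightarrow> nat \<Rightarrow> nat \<Rightarrow> bool" where
  "gs_prop C d N = (\<forall>\<eta> (w::nat\<Rightarrow>nat\<Rightarrow>complex) u (E::complex \<Rightarrow> (nat \<Rightarrow> complex) \<Rightarrow> bool) c.
     0 \<le> \<eta> \<longrightarrow> C * \<eta> \<le> 1 \<longrightarrow> orthonormal d N u \<longrightarrow>
     (\<forall>j<N. nrm d (\<lambda>i. w j i - u j i) \<le> \<eta>) \<longrightarrow>
     (\<forall>j<N. E (c j) (w j)) \<longrightarrow>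
     (\<forall>b. E b (\<lambda>i. 0)) \<longrightarrow>
     (\<forall>b x y. E b x \<longrightarrow> E b y \<longrightarrow> E b (\<lambda>i. x i + y i)) \<longrightarrow>
     (\<forall>b x y. E b x \<longrightarrow> E b y \<longrightarrow> E b (\<lambda>i. x i - y i)) \<longrightarrow>
     (\<forall>b a x. E b x \<longrightarrow> E b (\<lambda>i. a * x i)) \<longrightarrow>
     (\<forall>b b' x y. b \<noteq> b' \<longrightarrow> E b x \<longrightarrow> E b' y \<longrightarrow> ip d x y = 0) \<longrightarrow>
     (\<exists>q. orthonormal d N q \<and> (\<forall>j<N. E (c j) (q j)) \<and>
          (\<forall>j<N. nrm d (\<lambda>i. q j i - u j i) \<le> C * \<eta>) \<and>
          (\<forall>k\<le>N. orthonormal d k w \<longrightarrow> (\<forall>j<k. q j = w j))))"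

lemma gs: "\<exists>C>0. gs_prop C d N"
proof (induction N)
  case 0
  show ?case by (rule exI[of _ 1], auto simp: orthonormal_def gs_prop_def)
next
  case (Suc N)
  from Suc.IH obtain C where C0: "C > 0" and IH0: "gs_prop C d N" by blast
  note IH = IH0[unfolded gs_prop_def]
  define C' where "C' = 2 * (1 + real N * (2 * C + 1)) + C"
  have C'pos: "C' > 0" unfolding C'_def using C0 by (simp add: add_pos_nonneg)
  show ?case
  proof (rule exI[of _ C'], intro conjI C'pos, unfold gs_prop_def, intro allI impI)
    fix \<eta> and w :: "nat\<Rightarrow>nat\<Rightarrow>complex" and u and E :: "complex \<Rightarrow> (nat \<Rightarrow> complex) \<Rightarrow> bool" and c
    assume eta0: "0 \<le> \<eta>" and etaC: "C' * \<eta> \<le> 1" and onu: "orthonormal d (Suc N) u"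
      and wu: "\<forall>j<Suc N. nrm d (\<lambda>i. w j i - u j i) \<le> \<eta>"
      and Ew: "\<forall>j<Suc N. E (c j) (w j)"
      and E0: "\<forall>b. E b (\<lambda>i. 0)"
      and Eadd: "\<forall>b x y. E b x \<longrightarrow> E b y \<longrightarrow> E b (\<lambda>i. x i + y i)"
      and Ediff: "\<forall>b x y. E b x \<longrightarrow> E b y \<longrightarrow> E b (\<lambda>i. x i - y i)"
      and Escale: "\<forall>b a x. E b x \<longrightarrow> E b (\<lambda>i. a * x i)"
      and Eorth: "\<forall>b b' x y. b \<noteq> b' \<longrightarrow> E b x \<longrightarrow> E b' y \<longrightarrow> ip d x y = 0"
    have CC': "C \<le> C'" unfolding C'_def using C0 by (simp add: mult_nonneg_nonneg)
    have Ceta: "C * \<eta> \<le> 1" using CC' etaC eta0 mult_right_mono[OF CC' eta0] by linarith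
    have onuN: "orthonormal d N u" using onu orthonormal_mono by auto
    obtain q where qon: "orthonormal d N q" and Eq: "\<forall>j<N. E (c j) (q j)"
      and qu: "\<forall>j<N. nrm d (\<lambda>i. q j i - u j i) \<le> C * \<eta>"
      and qpre: "\<forall>k\<le>N. orthonormal d k w \<longrightarrow> (\<forall>j<k. q j = w j)"
    proof -
      have wuN: "\<forall>j<N. nrm d (\<lambda>i. w j i - u j i) \<le> \<eta>" using wu by auto
      have EwN: "\<forall>j<N. E (c j) (w j)" using Ew by auto
      note IHi = IH[THEN spec[of _ \<eta>], THEN spec[of _ w], THEN spec[of _ u], THEN spec[of _ E], THEN spec[of _ c]]
      have "\<exists>q. orthonormal d N q \<and> (\<forall>j<N. E (c j) (q j)) \<and>
          (\<forall>j<N. nrm d (\<lambda>i. q j i - u j i) \<le> C * \<eta>) \<and>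
          (\<forall>k\<le>N. orthonormal d k w \<longrightarrow> (\<forall>j<k. q j = w j))"
        by (rule IHi[THEN mp, THEN mp, THEN mp, THEN mp, THEN mp, THEN mp, THEN mp, THEN mp, THEN mp, THEN mp,
             OF eta0 Ceta onuN wuN EwN E0 Eadd Ediff Escale Eorth])
      thus ?thesis using that by blast
    qed
    define co where "co l = ip d (q l) (w N)" for l
    define z where "z = (\<lambda>i. w N i - (\<Sum>l<N. co l * q l i))"
    define qN where "qN = (\<lambda>i. complex_of_real (1 / nrm d z) * z i)"
    define q' where "q' = q(N := qN)"
    have uN: "nrm d (u N) = 1"
    proof -
      have "ip d (u N) (u N) = 1" using onu unfolding orthonormal_def by simp
      hence "complex_of_real ((nrm d (u N))\<^sup>2) = 1" by (simp only: ip_self)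
      hence "(nrm d (u N))\<^sup>2 = 1" by (simp only: of_real_eq_1_iff)
      thus ?thesis using nrm_nonneg by (smt (verit) nrm_nonneg power2_eq_1_iff)
    qed
    have ql: "nrm d (q l) = 1" if l: "l < N" for l
    proof -
      have "ip d (q l) (q l) = 1" using qon l unfolding orthonormal_def by simp
      hence "complex_of_real ((nrm d (q l))\<^sup>2) = 1" by (simp only: ip_self)
      hence "(nrm d (q l))\<^sup>2 = 1" by (simp only: of_real_eq_1_iff)
      thus ?thesis using nrm_nonneg by (smt (verit) nrm_nonneg power2_eq_1_iff)
    qed
    have wN: "nrm d (w N) \<le> 2"
    proof -
      have "nrm d (w N) \<le> nrm d (u N) + nrm d (\<lambda>i. w N i - u N i)" by (rule nrm_rev_tri)
      moreover have "\<eta> \<le> 1" using etaC eta0 C'_def C0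
        by (smt (verit) mult_le_cancel_right1 mult_nonneg_nonneg of_nat_0_le_iff)
      ultimately show ?thesis using wu uN by fastforce
    qed
    have co_bound: "cmod (co l) \<le> 2 * C * \<eta> + \<eta>" if l: "l < N" for l
    proof -
      have "co l = ip d (\<lambda>i. q l i - u l i) (w N) + ip d (u l) (\<lambda>i. w N i - u N i) + ip d (u l) (u N)"
        unfolding co_def by (simp add: ip_diff_left ip_diff_right)
      also have "ip d (u l) (u N) = 0" using onu l unfolding orthonormal_def by auto
      finally have e: "co l = ip d (\<lambda>i. q l i - u l i) (w N) + ip d (u l) (\<lambda>i. w N i - u N i)" by simp
      have ul: "nrm d (u l) = 1"
      proof -
        have "ip d (u l) (u l) = 1" using onu l unfolding orthonormal_def by simp
        hence "complex_of_real ((nrm d (u l))\<^sup>2) = 1" by (simp only: ip_self)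
        hence "(nrm d (u l))\<^sup>2 = 1" by (simp only: of_real_eq_1_iff)
        thus ?thesis using nrm_nonneg by (smt (verit) nrm_nonneg power2_eq_1_iff)
      qed
      have "cmod (co l) \<le> cmod (ip d (\<lambda>i. q l i - u l i) (w N)) + cmod (ip d (u l) (\<lambda>i. w N i - u N i))"
        unfolding e by (rule norm_triangle_ineq)
      also have "\<dots> \<le> nrm d (\<lambda>i. q l i - u l i) * nrm d (w N) + nrm d (u l) * nrm d (\<lambda>i. w N i - u N i)"
        by (intro add_mono ip_cs)
      also have "\<dots> \<le> (C * \<eta>) * 2 + 1 * \<eta>"
        using qu l wN ul wu C0 eta0 by (intro add_mono mult_mono, auto)
      finally show ?thesis by simp
    qed
    define \<rho> where "\<rho> = \<eta> * (1 + real N * (2 * C + 1))"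
    have zu: "nrm d (\<lambda>i. z i - u N i) \<le> \<rho>"
    proof -
      have "nrm d (\<lambda>i. z i - u N i) = nrm d (\<lambda>i. (w N i - u N i) - (\<Sum>l<N. co l * q l i))"
        unfolding z_def by (rule nrm_cong, simp)
      also have "\<dots> \<le> nrm d (\<lambda>i. w N i - u N i) + nrm d (\<lambda>i. \<Sum>l<N. co l * q l i)" by (rule nrm_diff)
      also have "nrm d (\<lambda>i. \<Sum>l<N. co l * q l i) \<le> (\<Sum>l<N. nrm d (\<lambda>i. co l * q l i))"
        by (rule nrm_sum, simp)
      also have "\<dots> = (\<Sum>l<N. cmod (co l))" by (rule sum.cong, auto simp: nrm_scale ql)
      also have "\<dots> \<le> (\<Sum>l<N. 2 * C * \<eta> + \<eta>)" by (rule sum_mono, simp add: co_bound)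
      finally have "nrm d (\<lambda>i. z i - u N i) \<le> nrm d (\<lambda>i. w N i - u N i) + (\<Sum>l<N. 2 * C * \<eta> + \<eta>)" by simp
      moreover have "nrm d (\<lambda>i. w N i - u N i) \<le> \<eta>" using wu by simp
      ultimately show ?thesis unfolding \<rho>_def by (simp add: algebra_simps)
    qed
    have rho_half: "\<rho> \<le> 1/2"
    proof -
      have "2 * \<rho> \<le> C' * \<eta>" unfolding \<rho>_def C'_def using C0 eta0 by (simp add: algebra_simps mult_nonneg_nonneg)
      thus ?thesis using etaC by linarith
    qed
    note nc = normalize_close[OF uN zu rho_half]
    have qNu: "nrm d (\<lambda>i. qN i - u N i) \<le> C' * \<eta>"
    proof -
      have "2 * \<rho> \<le> C' * \<eta>" unfolding \<rho>_def C'_def using C0 eta0 by (simp add: algebra_simps mult_nonneg_nonneg)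
      thus ?thesis using nc(2) unfolding qN_def by linarith
    qed
    have qN1: "nrm d qN = 1" unfolding qN_def by (rule nrm_normalize[OF nc(1)])
    have orthz: "ip d (q l) z = 0" if l: "l < N" for l
    proof -
      have "ip d (q l) z = ip d (q l) (w N) - ip d (q l) (\<lambda>i. \<Sum>l'<N. co l' * q l' i)"
        unfolding z_def by (rule ip_diff_right)
      also have "ip d (q l) (\<lambda>i. \<Sum>l'<N. co l' * q l' i) = co l"
        using ip_orth_expansion[OF qon l, of "{..<N}" co] l by simp
      finally show ?thesis unfolding co_def by simp
    qed
    have orthqN: "ip d (q l) qN = 0" if "l < N" for l
      unfolding qN_def ip_scale_right using orthz[OF that] by simp
    have q'on: "orthonormal d (Suc N) q'"
      unfolding orthonormal_def
    proof (intro allI impI)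
      fix i j assume i: "i < Suc N" and j: "j < Suc N"
      show "ip d (q' i) (q' j) = (if i = j then 1 else 0)"
      proof (cases "i = N"; cases "j = N")
        assume "i = N" "j = N" thus ?thesis unfolding q'_def using qN1 by (simp add: ip_self)
      next
        assume "i = N" "j \<noteq> N" thus ?thesis unfolding q'_def using orthqN j
          by (subst ip_conj, simp)
      next
        assume "i \<noteq> N" "j = N" thus ?thesis unfolding q'_def using orthqN i by simp
      next
        assume "i \<noteq> N" "j \<noteq> N" thus ?thesis unfolding q'_def using qon i j
          unfolding orthonormal_def by simp
      qed
    qed
    have EqN: "E (c N) qN"
    proof -
      have "E (c N) (\<lambda>i. \<Sum>l<N. co l * q l i)"
      proof (rule E_sum[OF E0 Eadd], simp)
        fix l assume "l \<in> {..<N}"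
        hence l: "l < N" by simp
        show "E (c N) (\<lambda>i. co l * q l i)"
        proof (cases "c l = c N")
          case True thus ?thesis using Escale Eq l by metis
        next
          case False
          hence "co l = 0" unfolding co_def using Eorth Eq l Ew by blast
          thus ?thesis using E0 by simp
        qed
      qed
      hence "E (c N) z" unfolding z_def using Ediff Ew by blast
      thus ?thesis unfolding qN_def using Escale by blast
    qed
    have pre: "\<forall>k\<le>Suc N. orthonormal d k w \<longrightarrow> (\<forall>j<k. q' j = w j)"
    proof (intro allI impI)
      fix k j assume k: "k \<le> Suc N" and onw: "orthonormal d k w" and j: "j < k"
      show "q' j = w j"
      proof (cases "k \<le> N")
        case True thus ?thesis using qpre onw j unfolding q'_def by auto
      next
        case False
        hence kN: "k = Suc N" using k by simp
        have onwN: "orthonormal d N w" using onw kN orthonormal_mono by auto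
        have qw: "\<forall>l<N. q l = w l" using qpre onwN by auto
        show ?thesis
        proof (cases "j = N")
          case False thus ?thesis using qw j kN unfolding q'_def by auto
        next
          case True
          have "co l = 0" if "l < N" for l using qw that onw kN unfolding co_def orthonormal_def by auto
          hence zw: "z = w N" unfolding z_def by simp
          have "ip d (w N) (w N) = 1" using onw kN unfolding orthonormal_def by simp
          hence "complex_of_real ((nrm d (w N))\<^sup>2) = 1" by (simp only: ip_self)
          hence "(nrm d (w N))\<^sup>2 = 1" by (simp only: of_real_eq_1_iff)
          hence "nrm d (w N) = 1" by (smt (verit) nrm_nonneg power2_eq_1_iff)
          thus ?thesis using True unfolding q'_def qN_def zw by simp
        qed
      qed
    qed
    show "\<exists>q. orthonormal d (Suc N) q \<and> (\<forall>j<Suc N. E (c j) (q j)) \<and>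
          (\<forall>j<Suc N. nrm d (\<lambda>i. q j i - u j i) \<le> C' * \<eta>) \<and>
          (\<forall>k\<le>Suc N. orthonormal d k w \<longrightarrow> (\<forall>j<k. q j = w j))"
    proof (rule exI[of _ q'], intro conjI q'on pre)
      show "\<forall>j<Suc N. E (c j) (q' j)" using Eq EqN unfolding q'_def by (auto simp: less_Suc_eq)
      show "\<forall>j<Suc N. nrm d (\<lambda>i. q' j i - u j i) \<le> C' * \<eta>"
      proof (intro allI impI)
        fix j assume j: "j < Suc N"
        show "nrm d (\<lambda>i. q' j i - u j i) \<le> C' * \<eta>"
        proof (cases "j = N")
          case True thus ?thesis using qNu unfolding q'_def by simp
        next
          case False
          hence "nrm d (\<lambda>i. q' j i - u j i) \<le> C * \<eta>" using qu j unfolding q'_def by auto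
          also have "\<dots> \<le> C' * \<eta>" using CC' eta0 by (rule mult_right_mono)
          finally show ?thesis .
        qed
      qed
    qed
  qed
qed

section \<open>Consequences of a spectral decomposition\<close>

locale spec =
  fixes H :: "complex mat" and n :: nat and v :: "nat \<Rightarrow> nat \<Rightarrow> complex" and lam :: "nat \<Rightarrow> real"
  assumes H: "H \<in> carrier_mat n n" and on: "orthonormal n n v"
    and ev: "\<And>k. k < n \<Longrightarrow> eig H (complex_of_real (lam k)) (v k)"
begin

lemma decomp:
  assumes i: "i < n"
  shows "mv H x i - complex_of_real t * x i = (\<Sum>k<n. (ip n (v k) x * complex_of_real (lam k - t)) * v k i)"
proof -
  define x' where "x' = (\<lambda>j. \<Sum>k<n. ip n (v k) x * v k j)"
  have "mv H x = mv H x'" using H by (intro mv_cong, auto simp: x'_def intro: expansion[OF on])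
  hence "mv H x i = (\<Sum>k<n. ip n (v k) x * mv H (v k) i)" unfolding x'_def mv_sum[OF finite_lessThan] by simp
  also have "\<dots> = (\<Sum>k<n. ip n (v k) x * (complex_of_real (lam k) * v k i))"
    using ev i H unfolding eig_def by (intro sum.cong, auto)
  finally have a: "mv H x i = (\<Sum>k<n. ip n (v k) x * (complex_of_real (lam k) * v k i))" .
  have b: "x i = (\<Sum>k<n. ip n (v k) x * v k i)" by (rule expansion[OF on i])
  show ?thesis unfolding a
    by (subst b, simp add: sum_distrib_left sum_subtractf[symmetric] algebra_simps)
qed

lemma norm_decomp:
  "(nrm n (\<lambda>i. mv H x i - complex_of_real t * x i))\<^sup>2 = (\<Sum>k<n. (cmod (ip n (v k) x))\<^sup>2 * (lam k - t)\<^sup>2)"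
proof -
  have "nrm n (\<lambda>i. mv H x i - complex_of_real t * x i) = nrm n (\<lambda>i. \<Sum>k<n. (ip n (v k) x * complex_of_real (lam k - t)) * v k i)"
    by (rule nrm_cong, rule decomp)
  hence "(nrm n (\<lambda>i. mv H x i - complex_of_real t * x i))\<^sup>2 = (\<Sum>k<n. (cmod (ip n (v k) x * complex_of_real (lam k - t)))\<^sup>2)"
    using pythag[OF on, of "{..<n}"] by simp
  also have "\<dots> = (\<Sum>k<n. (cmod (ip n (v k) x))\<^sup>2 * (lam k - t)\<^sup>2)"
  proof (rule sum.cong[OF refl])
    fix k
    have "cmod (complex_of_real (lam k - t)) = \<bar>lam k - t\<bar>" by (rule norm_of_real)
    thus "(cmod (ip n (v k) x * complex_of_real (lam k - t)))\<^sup>2 = (cmod (ip n (v k) x))\<^sup>2 * (lam k - t)\<^sup>2"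
      by (simp only: norm_mult power_mult_distrib power2_abs)
  qed
  finally show ?thesis .
qed

lemma norm_x: "(nrm n x)\<^sup>2 = (\<Sum>k<n. (cmod (ip n (v k) x))\<^sup>2)"
proof -
  have "nrm n x = nrm n (\<lambda>i. \<Sum>k<n. ip n (v k) x * v k i)" by (rule nrm_cong, rule expansion[OF on])
  thus ?thesis using pythag[OF on, of "{..<n}"] by simp
qed

lemma near_eigenvalue:
  assumes x: "nrm n x = 1"
  shows "\<exists>k<n. \<bar>lam k - t\<bar> \<le> nrm n (\<lambda>i. mv H x i - complex_of_real t * x i)"
proof -
  have "n \<noteq> 0"
  proof
    assume "n = 0"
    hence "nrm n x = 0" by (simp add: nrm_def)
    thus False using x by simp
  qed
  define m where "m = Min ((\<lambda>k. \<bar>lam k - t\<bar>) ` {..<n})"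
  have fin: "finite ((\<lambda>k. \<bar>lam k - t\<bar>) ` {..<n})" by simp
  have ne: "(\<lambda>k. \<bar>lam k - t\<bar>) ` {..<n} \<noteq> {}" using \<open>n \<noteq> 0\<close> by auto
  obtain k0 where k0: "k0 < n" "m = \<bar>lam k0 - t\<bar>" using Min_in[OF fin ne] unfolding m_def by auto
  have mle: "m \<le> \<bar>lam k - t\<bar>" if "k < n" for k unfolding m_def using that by (intro Min_le, auto)
  have "m\<^sup>2 = (\<Sum>k<n. (cmod (ip n (v k) x))\<^sup>2) * m\<^sup>2" using norm_x[of x] x by simp
  also have "\<dots> = (\<Sum>k<n. (cmod (ip n (v k) x))\<^sup>2 * m\<^sup>2)" by (simp add: sum_distrib_right)
  also have "\<dots> \<le> (\<Sum>k<n. (cmod (ip n (v k) x))\<^sup>2 * (lam k - t)\<^sup>2)"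
  proof (rule sum_mono)
    fix k assume "k \<in> {..<n}"
    hence "m\<^sup>2 \<le> (lam k - t)\<^sup>2" using mle[of k] k0
      by (metis abs_ge_zero lessThan_iff power2_abs power_mono)
    thus "(cmod (ip n (v k) x))\<^sup>2 * m\<^sup>2 \<le> (cmod (ip n (v k) x))\<^sup>2 * (lam k - t)\<^sup>2"
      by (simp add: mult_left_mono)
  qed
  also have "\<dots> = (nrm n (\<lambda>i. mv H x i - complex_of_real t * x i))\<^sup>2" by (rule norm_decomp[symmetric])
  finally have "m\<^sup>2 \<le> (nrm n (\<lambda>i. mv H x i - complex_of_real t * x i))\<^sup>2" .
  hence "m \<le> nrm n (\<lambda>i. mv H x i - complex_of_real t * x i)"
    by (rule power2_le_imp_le, simp)
  thus ?thesis using k0 by auto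
qed

lemma far_weight:
  assumes g: "g > 0"
  shows "(\<Sum>k\<in>{k. k < n \<and> g \<le> \<bar>lam k - t\<bar>}. (cmod (ip n (v k) x))\<^sup>2) * g\<^sup>2
         \<le> (nrm n (\<lambda>i. mv H x i - complex_of_real t * x i))\<^sup>2"
proof -
  let ?S = "{k. k < n \<and> g \<le> \<bar>lam k - t\<bar>}"
  have "(\<Sum>k\<in>?S. (cmod (ip n (v k) x))\<^sup>2) * g\<^sup>2 = (\<Sum>k\<in>?S. (cmod (ip n (v k) x))\<^sup>2 * g\<^sup>2)"
    by (simp add: sum_distrib_right)
  also have "\<dots> \<le> (\<Sum>k\<in>?S. (cmod (ip n (v k) x))\<^sup>2 * (lam k - t)\<^sup>2)"
  proof (rule sum_mono)
    fix k assume "k \<in> ?S"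
    hence "g\<^sup>2 \<le> (lam k - t)\<^sup>2" using g by (metis (mono_tags, lifting) mem_Collect_eq less_le_not_le power2_abs power_mono)
    thus "(cmod (ip n (v k) x))\<^sup>2 * g\<^sup>2 \<le> (cmod (ip n (v k) x))\<^sup>2 * (lam k - t)\<^sup>2"
      by (simp add: mult_left_mono)
  qed
  also have "\<dots> \<le> (\<Sum>k<n. (cmod (ip n (v k) x))\<^sup>2 * (lam k - t)\<^sup>2)"
    by (rule sum_mono2, auto)
  also have "\<dots> = (nrm n (\<lambda>i. mv H x i - complex_of_real t * x i))\<^sup>2" by (rule norm_decomp[symmetric])
  finally show ?thesis .
qed

lemma proj_error:
  assumes S: "S \<subseteq> {..<n}"
  shows "(nrm n (\<lambda>i. x i - (\<Sum>k\<in>S. ip n (v k) x * v k i)))\<^sup>2 = (\<Sum>k\<in>{..<n} - S. (cmod (ip n (v k) x))\<^sup>2)"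
proof -
  have "nrm n (\<lambda>i. x i - (\<Sum>k\<in>S. ip n (v k) x * v k i)) = nrm n (\<lambda>i. \<Sum>k\<in>{..<n} - S. ip n (v k) x * v k i)"
  proof (rule nrm_cong)
    fix i assume i: "i < n"
    have "x i = (\<Sum>k<n. ip n (v k) x * v k i)" by (rule expansion[OF on i])
    also have "\<dots> = (\<Sum>k\<in>S. ip n (v k) x * v k i) + (\<Sum>k\<in>{..<n} - S. ip n (v k) x * v k i)"
      using S by (metis (no_types, lifting) add.commute finite_lessThan sum.subset_diff)
    finally show "x i - (\<Sum>k\<in>S. ip n (v k) x * v k i) = (\<Sum>k\<in>{..<n} - S. ip n (v k) x * v k i)" by simp
  qed
  thus ?thesis using pythag[OF on, of "{..<n} - S"] by auto
qed

lemma eig_proj: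
  assumes S: "S \<subseteq> {..<n}" and lS: "\<And>k. k \<in> S \<Longrightarrow> lam k = \<nu>"
  shows "eig H (complex_of_real \<nu>) (\<lambda>i. \<Sum>k\<in>S. c k * v k i)"
  using S lS ev by (intro eig_sum, auto intro: finite_subset)

lemma ev_set:
  assumes herm: "ctrans H = H"
  shows "{z. eigenvalue H z} = (\<lambda>k. complex_of_real (lam k)) ` {..<n}"
proof (intro equalityI subsetI)
  fix z assume "z \<in> {z. eigenvalue H z}"
  then obtain u where u: "u \<in> carrier_vec n" "u \<noteq> 0\<^sub>v n" "H *\<^sub>v u = z \<cdot>\<^sub>v u"
    unfolding eigenvalue_def eigenvector_def using H by auto
  define x where "x i = u $ i" for i
  have ex: "eig H z x" unfolding eig_def
  proof (intro allI impI)
    fix i assume "i < dim_row H"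
    hence i: "i < n" using H by simp
    have "(H *\<^sub>v u) $ i = row H i \<bullet> u" using H i by simp
    also have "\<dots> = mv H x i" using H i u unfolding mv_def x_def scalar_prod_def by (simp add: atLeast0LessThan)
    finally show "mv H x i = z * x i" using u(3) i u(1) unfolding x_def by simp
  qed
  have "\<exists>i<n. x i \<noteq> 0"
  proof (rule ccontr)
    assume "\<not> ?thesis"
    hence "u = 0\<^sub>v n" using u(1) unfolding x_def by (intro eq_vecI, auto)
    thus False using u(2) by simp
  qed
  hence "nrm n x \<noteq> 0" using nrm_zero_iff by blast
  hence "\<exists>k<n. ip n (v k) x \<noteq> 0" using norm_x[of x] by (metis (no_types, lifting) lessThan_iff norm_zero power_zero_numeral sum.neutral zero_less_power2 less_numeral_extra(3))
  then obtain k where k: "k < n" "ip n (v k) x \<noteq> 0" by auto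
  have "z * ip n (v k) x = ip n (v k) (mv H x)"
  proof -
    have "ip n (v k) (mv H x) = ip n (v k) (\<lambda>i. z * x i)" using ex H unfolding eig_def by (intro ip_cong, auto)
    thus ?thesis by (simp add: ip_scale_right)
  qed
  also have "\<dots> = ip n (mv H (v k)) x" using herm_ip[OF H herm] by simp
  also have "\<dots> = cnj (complex_of_real (lam k)) * ip n (v k) x" using eig_ip_left[OF H ev[OF k(1)]] by simp
  finally have "z = complex_of_real (lam k)" using k(2) by simp
  thus "z \<in> (\<lambda>k. complex_of_real (lam k)) ` {..<n}" using k by auto
next
  fix z assume "z \<in> (\<lambda>k. complex_of_real (lam k)) ` {..<n}"
  then obtain k where k: "k < n" and z: "z = complex_of_real (lam k)" by auto
  define u where "u = vec n (v k)"
  have "ip n (v k) (v k) = 1" using on k unfolding orthonormal_def by simp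
  hence "nrm n (v k) \<noteq> 0" by (auto simp: ip_self)
  then obtain i where i: "i < n" "v k i \<noteq> 0" using nrm_zero_iff by blast
  have "u \<noteq> 0\<^sub>v n" using i unfolding u_def by (metis index_vec index_zero_vec(1))
  moreover have "H *\<^sub>v u = z \<cdot>\<^sub>v u"
  proof (rule eq_vecI)
    fix j assume "j < dim_vec (z \<cdot>\<^sub>v u)"
    hence j: "j < n" unfolding u_def by simp
    have "(H *\<^sub>v u) $ j = row H j \<bullet> u" using H j unfolding u_def by simp
    also have "\<dots> = mv H (v k) j" using H j unfolding u_def mv_def scalar_prod_def by (simp add: atLeast0LessThan)
    also have "\<dots> = z * v k j" using ev[OF k] j H z unfolding eig_def by auto
    finally show "(H *\<^sub>v u) $ j = (z \<cdot>\<^sub>v u) $ j" using j unfolding u_def by simp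
  qed (insert H, simp add: u_def)
  ultimately have "eigenvector H u z" unfolding eigenvector_def u_def using H by simp
  thus "z \<in> {z. eigenvalue H z}" unfolding eigenvalue_def by auto
qed

end

section \<open>Combinatorics\<close>

lemma card_bound:
  fixes s :: "nat \<Rightarrow> 'a" and J :: "nat \<Rightarrow> nat set" and ls :: "nat list"
  assumes J: "\<forall>j<length ls. J j \<subseteq> {0..<n} \<and> card (J j) = ls ! j"
    and disj: "\<forall>j<length ls. \<forall>k<length ls. j \<noteq> k \<longrightarrow> J j \<inter> J k = {}"
    and eq: "\<forall>j<length ls. \<forall>i\<in>J j. \<forall>i'\<in>J j. s i = s i'"
    and pos: "\<forall>j<length ls. 1 \<le> ls ! j"
  shows "card (s ` {..<n}) \<le> n - (\<Sum>j<length ls. ls ! j - 1)"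
proof -
  define r where "r = length ls"
  define U where "U = (\<Union>j\<in>{..<r}. J j)"
  have Jsub: "J j \<subseteq> {0..<n}" if "j < r" for j using spec[OF J, of j] that unfolding r_def by simp
  have Jcard: "card (J j) = ls ! j" if "j < r" for j using spec[OF J, of j] that unfolding r_def by simp
  have finJ: "finite (J j)" if "j < r" for j using Jsub[OF that] by (rule finite_subset, simp)
  have cardU: "card U = (\<Sum>j<r. card (J j))" unfolding U_def
  proof (rule card_UN_disjoint)
    show "\<forall>i\<in>{..<r}. finite (J i)" using finJ by simp
    show "\<forall>i\<in>{..<r}. \<forall>j\<in>{..<r}. i \<noteq> j \<longrightarrow> J i \<inter> J j = {}" using disj unfolding r_def by simp
  qed simp
  also have "\<dots> = (\<Sum>j<r. ls ! j)" using Jcard by simp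
  finally have cardU: "card U = (\<Sum>j<r. ls ! j)" .
  have Usub: "U \<subseteq> {..<n}"
  proof
    fix x assume "x \<in> U"
    then obtain j where j: "j < r" and xj: "x \<in> J j" unfolding U_def by auto
    show "x \<in> {..<n}" using Jsub[OF j] xj by auto
  qed
  have finU: "finite U" using Usub by (rule finite_subset, simp)
  have sumle: "(\<Sum>j<r. ls ! j) \<le> n" using cardU card_mono[OF _ Usub] by simp
  have sub: "s ` {..<n} \<subseteq> s ` ({..<n} - U) \<union> (\<Union>j\<in>{..<r}. s ` J j)" unfolding U_def by blast
  have fin2: "finite (s ` ({..<n} - U) \<union> (\<Union>j\<in>{..<r}. s ` J j))" using finJ by simp
  have "card (s ` {..<n}) \<le> card (s ` ({..<n} - U) \<union> (\<Union>j\<in>{..<r}. s ` J j))"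
    by (rule card_mono[OF fin2 sub])
  also have "\<dots> \<le> card (s ` ({..<n} - U)) + card (\<Union>j\<in>{..<r}. s ` J j)" by (rule card_Un_le)
  also have "card (s ` ({..<n} - U)) \<le> card ({..<n} - U)" by (rule card_image_le, simp)
  also have "card ({..<n} - U) = n - card U" using Usub finU by (simp add: card_Diff_subset)
  also have "card (\<Union>j\<in>{..<r}. s ` J j) \<le> (\<Sum>j<r. card (s ` J j))" by (rule card_UN_le, simp)
  also have "\<dots> \<le> (\<Sum>j<r. 1)"
  proof (rule sum_mono)
    fix j assume "j \<in> {..<r}"
    hence j: "j < r" by simp
    have "J j \<noteq> {}"
    proof
      assume "J j = {}"
      hence "ls ! j = 0" using Jcard[OF j] by simp
      thus False using spec[OF pos, of j] j unfolding r_def by simp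
    qed
    then obtain i0 where i0: "i0 \<in> J j" by auto
    have "s ` J j \<subseteq> {s i0}"
    proof
      fix y assume "y \<in> s ` J j"
      then obtain i where i: "i \<in> J j" "y = s i" by auto
      have "s i = s i0" using spec[OF eq, of j] j i(1) i0 unfolding r_def by blast
      thus "y \<in> {s i0}" using i by simp
    qed
    hence "card (s ` J j) \<le> card {s i0}" by (rule card_mono[rotated], simp)
    thus "card (s ` J j) \<le> 1" by simp
  qed
  also have "(\<Sum>j<r. (1::nat)) = r" by simp
  finally have a: "card (s ` {..<n}) \<le> n - (\<Sum>j<r. ls ! j) + r" using cardU by simp
  have b: "(\<Sum>j<r. ls ! j - 1) + r = (\<Sum>j<r. ls ! j)"
  proof -
    have "(\<Sum>j<r. (ls ! j - 1) + 1) = (\<Sum>j<r. ls ! j - 1) + (\<Sum>j<r. (1::nat))" by (rule sum.distrib)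
    hence "(\<Sum>j<r. ls ! j - 1) + r = (\<Sum>j<r. (ls ! j - 1) + 1)" by simp
    also have "\<dots> = (\<Sum>j<r. ls ! j)" using pos unfolding r_def by (intro sum.cong, auto)
    finally show ?thesis .
  qed
  show ?thesis using a b sumle unfolding r_def by linarith
qed

section \<open>Products of linear factors\<close>

lemma prod_list_remove1: "a \<in> set xs \<Longrightarrow> prod_list (map f xs) = f a * prod_list (map f (remove1 a xs))"
  for f :: "'a \<Rightarrow> 'b :: comm_monoid_mult"
proof (induction xs)
  case Nil thus ?case by simp
next
  case (Cons x xs)
  show ?case
  proof (cases "x = a")
    case True thus ?thesis by simp
  next
    case False
    hence "a \<in> set xs" using Cons.prems by simp
    hence "prod_list (map f (x # xs)) = f x * (f a * prod_list (map f (remove1 a xs)))" using Cons.IH by simp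
    also have "\<dots> = f a * (f x * prod_list (map f (remove1 a xs)))" by (rule mult.left_commute)
    finally show ?thesis using False by simp
  qed
qed

lemma prod_linear_mset:
  fixes as bs :: "complex list"
  shows "(\<Prod>a\<leftarrow>as. [:- a, 1:]) = (\<Prod>b\<leftarrow>bs. [:- b, 1:]) \<Longrightarrow> mset as = mset bs"
proof (induction as arbitrary: bs)
  case Nil
  show ?case
  proof (cases bs)
    case (Cons b bs')
    have "poly (\<Prod>b\<leftarrow>bs. [:- b, 1:]) b = 0" unfolding Cons by simp
    hence "poly (1 :: complex poly) b = 0" using Nil by simp
    thus ?thesis by simp
  qed simp
next
  case (Cons a as)
  have "poly (\<Prod>b\<leftarrow>bs. [:- b, 1:]) a = 0" using Cons.prems[symmetric] by simp
  hence "(\<Prod>b\<leftarrow>bs. (a - b)) = 0" by (simp add: poly_prod_list o_def)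
  hence ab: "a \<in> set bs" by (force simp: prod_list_zero_iff)
  have "[:- a, 1:] * (\<Prod>a\<leftarrow>as. [:- a, 1:]) = [:- a, 1:] * (\<Prod>b\<leftarrow>remove1 a bs. [:- b, 1:])"
    using Cons.prems prod_list_remove1[OF ab, of "\<lambda>b. [:- b, 1:]"] by simp
  moreover have nz: "[:- a, 1:] \<noteq> (0::complex poly)" by simp
  ultimately have "(\<Prod>a\<leftarrow>as. [:- a, 1:]) = (\<Prod>b\<leftarrow>remove1 a bs. [:- b, 1:])"
    by (simp only: mult_left_cancel[OF nz])
  hence "mset as = mset (remove1 a bs)" by (rule Cons.IH)
  thus ?case using ab by simp
qed

lemma ctrans_ctrans: "ctrans (ctrans X) = X"
  by (rule eq_matI, auto simp: ctrans_def)

lemma ctrans_mult: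
  assumes X: "X \<in> carrier_mat p q" and Y: "Y \<in> carrier_mat q r"
  shows "ctrans (X * Y) = ctrans Y * ctrans X"
  using X Y by (intro eq_matI, auto simp: ctrans_def scalar_prod_def row_def col_def mult.commute)

lemma ctrans_carrier': "X \<in> carrier_mat p q \<Longrightarrow> ctrans X \<in> carrier_mat q p"
  using ctrans_carrier[of X] by auto

lemma gram_carrier: "X \<in> carrier_mat p q \<Longrightarrow> X * ctrans X \<in> carrier_mat p p"
  using mult_carrier_mat ctrans_carrier' by blast

lemma herm_gram:
  assumes X: "X \<in> carrier_mat p q"
  shows "ctrans (X * ctrans X) = X * ctrans X"
  using ctrans_mult[OF X ctrans_carrier'[OF X]] X by (simp add: ctrans_ctrans)

lemma eig_add: "eig H a x \<Longrightarrow> eig H a y \<Longrightarrow> eig H a (\<lambda>i. x i + y i)"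
  unfolding eig_def by (simp add: mv_add algebra_simps)

lemma eig_orth_gen:
  assumes H: "H \<in> carrier_mat n n" and herm: "ctrans H = H" and ex: "eig H a x" and ey: "eig H b y"
    and ab: "a \<noteq> b"
  shows "ip n x y = 0"
proof (cases "nrm n x = 0")
  case True
  hence "\<forall>i<n. x i = 0" using nrm_zero_iff by blast
  thus ?thesis unfolding ip_def by simp
next
  case False
  hence "cnj a = a" using eig_real[OF H herm ex] by simp
  thus ?thesis using eig_orth[OF H herm ex ey _ ab] by simp
qed

lemma unit_e:
  assumes U: "U \<in> unitary_mat d" and j: "j < d" and i: "i < d"
  shows "mv (ctrans U) (colf U j) i = (if i = j then 1 else 0)"
proof -
  have Uc: "U \<in> carrier_mat d d" using U unfolding unitary_mat_def by simp
  have "mv (ctrans U) (colf U j) i = (\<Sum>k<d. cnj (U $$ (k, i)) * colf U j k)"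
    using Uc i unfolding mv_def by simp
  also have "\<dots> = ip d (colf U i) (colf U j)"
    unfolding ip_def colf_def using Uc i by (intro sum.cong, auto)
  also have "\<dots> = (if i = j then 1 else 0)" using unitary_orthonormal[OF U] i j unfolding orthonormal_def by simp
  finally show ?thesis .
qed

lemma mv_e:
  assumes U: "U \<in> carrier_mat p q" and j: "j < q" and i: "i < p"
  shows "mv U (\<lambda>l. if l = j then c else 0) i = c * U $$ (i, j)"
proof -
  have "mv U (\<lambda>l. if l = j then c else 0) i = (\<Sum>k<q. U $$ (i, k) * (if k = j then c else 0))"
    using U i unfolding mv_def by simp
  also have "\<dots> = (\<Sum>k<q. if k = j then U $$ (i, k) * c else 0)" by (rule sum.cong, auto)
  also have "\<dots> = c * U $$ (i, j)" using j by simp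
  finally show ?thesis .
qed

lemma svd_cols:
  assumes PL: "PL \<in> unitary_mat n" and PR: "PR \<in> unitary_mat m" and D: "D \<in> real_diag_mat n m"
    and nm: "n \<le> m" and A: "A = PL * D * ctrans PR" and j: "j < n"
  shows "\<forall>i<m. mv (ctrans A) (colf PL j) i = complex_of_real (Re (D $$ (j,j))) * colf PR j i"
    and "\<forall>i<n. mv A (colf PR j) i = complex_of_real (Re (D $$ (j,j))) * colf PL j i"
proof -
  have PLc: "PL \<in> carrier_mat n n" using PL unfolding unitary_mat_def by simp
  have PRc: "PR \<in> carrier_mat m m" using PR unfolding unitary_mat_def by simp
  have Dc: "D \<in> carrier_mat n m" using D unfolding real_diag_mat_def by simp
  have Doff: "\<And>i k. i < n \<Longrightarrow> k < m \<Longrightarrow> i \<noteq> k \<Longrightarrow> D $$ (i, k) = 0" using D unfolding real_diag_mat_def by simp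
  have Dreal: "D $$ (j, j) = complex_of_real (Re (D $$ (j, j)))"
    using D j nm unfolding real_diag_mat_def by (simp add: complex_is_Real_iff complex_eq_iff)
  have Dcnj: "cnj (D $$ (j,j)) = D $$ (j,j)" by (metis Dreal complex_cnj_complex_of_real)
  define s where "s = complex_of_real (Re (D $$ (j,j)))"
  have jm: "j < m" using j nm by simp
  have cA: "ctrans A = PR * (ctrans D * ctrans PL)"
  proof -
    have c1: "PL * D \<in> carrier_mat n m" using PLc Dc by simp
    have c2: "ctrans PR \<in> carrier_mat m m" using ctrans_carrier'[OF PRc] .
    have "ctrans A = ctrans (ctrans PR) * ctrans (PL * D)" unfolding A by (rule ctrans_mult[OF c1 c2])
    also have "\<dots> = PR * (ctrans D * ctrans PL)" using ctrans_mult[OF PLc Dc] by (simp add: ctrans_ctrans)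
    finally show ?thesis .
  qed
  have e1: "mv (ctrans PL) (colf PL j) = (\<lambda>l. if l = j then 1 else 0)"
  proof
    fix l show "mv (ctrans PL) (colf PL j) l = (if l = j then 1 else 0)"
      using unit_e[OF PL j, of l] PLc j by (cases "l < n", auto simp: mv_def)
  qed
  have e2: "mv (ctrans D) (\<lambda>l. if l = j then 1 else 0) = (\<lambda>i. if i = j then s else 0)"
  proof
    fix i show "mv (ctrans D) (\<lambda>l. if l = j then 1 else 0) i = (if i = j then s else 0)"
    proof (cases "i < m")
      case True
      have "mv (ctrans D) (\<lambda>l. if l = j then 1 else 0) i = 1 * ctrans D $$ (i, j)"
        by (rule mv_e, insert Dc j True, auto)
      also have "\<dots> = cnj (D $$ (j, i))" using Dc j True by simp
      also have "\<dots> = (if i = j then s else 0)" using Doff[of j i] j True Dreal Dcnj unfolding s_def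
        by (cases "i = j", auto)
      finally show ?thesis .
    next
      case False thus ?thesis using Dc jm unfolding mv_def by auto
    qed
  qed
  show "\<forall>i<m. mv (ctrans A) (colf PL j) i = complex_of_real (Re (D $$ (j,j))) * colf PR j i"
  proof (intro allI impI)
    fix i assume i: "i < m"
    have "mv (ctrans A) (colf PL j) = mv PR (mv (ctrans D) (mv (ctrans PL) (colf PL j)))"
    proof -
      have c3: "ctrans D \<in> carrier_mat m n" using ctrans_carrier'[OF Dc] .
      have c4: "ctrans PL \<in> carrier_mat n n" using ctrans_carrier'[OF PLc] .
      have c5: "ctrans D * ctrans PL \<in> carrier_mat m n" using c3 c4 by simp
      show ?thesis unfolding cA mv_mult[OF PRc c5] mv_mult[OF c3 c4] ..
    qed
    also have "\<dots> = mv PR (\<lambda>i. if i = j then s else 0)" unfolding e1 e2 ..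
    finally have "mv (ctrans A) (colf PL j) i = mv PR (\<lambda>i. if i = j then s else 0) i" by simp
    also have "\<dots> = s * PR $$ (i, j)" by (rule mv_e[OF PRc jm i])
    finally show "mv (ctrans A) (colf PL j) i = complex_of_real (Re (D $$ (j,j))) * colf PR j i"
      unfolding s_def colf_def using PRc i by simp
  qed
  have f1: "mv (ctrans PR) (colf PR j) = (\<lambda>l. if l = j then 1 else 0)"
  proof
    fix l show "mv (ctrans PR) (colf PR j) l = (if l = j then 1 else 0)"
      using unit_e[OF PR jm, of l] PRc jm by (cases "l < m", auto simp: mv_def)
  qed
  have f2: "mv D (\<lambda>l. if l = j then 1 else 0) = (\<lambda>i. if i = j then s else 0)"
  proof
    fix i show "mv D (\<lambda>l. if l = j then 1 else 0) i = (if i = j then s else 0)"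
    proof (cases "i < n")
      case True
      have "mv D (\<lambda>l. if l = j then 1 else 0) i = 1 * D $$ (i, j)"
        by (rule mv_e, insert Dc jm True, auto)
      also have "\<dots> = (if i = j then s else 0)" using Doff[of i j] jm True Dreal unfolding s_def
        by (cases "i = j", auto)
      finally show ?thesis .
    next
      case False thus ?thesis using Dc j unfolding mv_def by auto
    qed
  qed
  show "\<forall>i<n. mv A (colf PR j) i = complex_of_real (Re (D $$ (j,j))) * colf PL j i"
  proof (intro allI impI)
    fix i assume i: "i < n"
    have c2: "ctrans PR \<in> carrier_mat m m" using ctrans_carrier'[OF PRc] .
    have "A = PL * (D * ctrans PR)" unfolding A by (rule assoc_mult_mat[OF PLc Dc c2])
    hence "mv A (colf PR j) = mv PL (mv D (mv (ctrans PR) (colf PR j)))"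
      using mv_mult[OF PLc mult_carrier_mat[OF Dc c2]] mv_mult[OF Dc c2] by simp
    also have "\<dots> = mv PL (\<lambda>i. if i = j then s else 0)" unfolding f1 f2 ..
    finally have "mv A (colf PR j) i = mv PL (\<lambda>i. if i = j then s else 0) i" by simp
    also have "\<dots> = s * PL $$ (i, j)" by (rule mv_e[OF PLc j i])
    finally show "mv A (colf PR j) i = complex_of_real (Re (D $$ (j,j))) * colf PL j i"
      unfolding s_def colf_def using PLc i by simp
  qed
qed

lemma psd_eig:
  assumes B: "B \<in> carrier_mat n m" and e: "eig (B * ctrans B) (complex_of_real l) x" and x: "nrm n x = 1"
  shows "l = (nrm m (mv (ctrans B) x))\<^sup>2"
proof -
  have H: "B * ctrans B \<in> carrier_mat n n" using gram_carrier[OF B] .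
  have "complex_of_real l = complex_of_real l * ip n x x" using x by (simp add: ip_self)
  also have "\<dots> = ip n x (mv (B * ctrans B) x)" using eig_ip_right[OF H e] by simp
  also have "\<dots> = ip n x (mv B (mv (ctrans B) x))" by (simp only: mv_mult[OF B ctrans_carrier'[OF B]])
  also have "\<dots> = ip n (mv B (mv (ctrans B) x)) x" 
  proof -
    have "ip n (mv B (mv (ctrans B) x)) x = ip m (mv (ctrans B) x) (mv (ctrans B) x)"
      using mv_adj[OF B] by simp
    also have "ip n x (mv B (mv (ctrans B) x)) = ip m (mv (ctrans B) x) (mv (ctrans B) x)"
      using mv_adj[OF ctrans_carrier[of B], of x "mv (ctrans B) x"] B by (simp add: ctrans_ctrans)
    finally show ?thesis by simp
  qed
  also have "\<dots> = ip m (mv (ctrans B) x) (mv (ctrans B) x)" using mv_adj[OF B] by simp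
  also have "\<dots> = complex_of_real ((nrm m (mv (ctrans B) x))\<^sup>2)" by (rule ip_self)
  finally show ?thesis by (simp only: of_real_eq_iff)
qed

lemma sqrt_diff_le:
  assumes a: "0 < a" and b: "0 \<le> b"
  shows "\<bar>sqrt a - sqrt b\<bar> \<le> \<bar>a - b\<bar> / sqrt a"
proof -
  have sa: "sqrt a > 0" using a by simp
  have "a - b = (sqrt a - sqrt b) * (sqrt a + sqrt b)"
    using a b by (simp add: algebra_simps)
  hence e1: "\<bar>a - b\<bar> = \<bar>sqrt a - sqrt b\<bar> * \<bar>sqrt a + sqrt b\<bar>" by (simp add: abs_mult)
  have e2: "\<bar>sqrt a + sqrt b\<bar> = sqrt a + sqrt b" using a b by simp
  have e3: "\<bar>sqrt a - sqrt b\<bar> * sqrt a \<le> \<bar>sqrt a - sqrt b\<bar> * (sqrt a + sqrt b)"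
    by (rule mult_left_mono, insert b, auto)
  have "\<bar>sqrt a - sqrt b\<bar> * sqrt a \<le> \<bar>a - b\<bar>" using e1 e2 e3 by simp
  thus ?thesis using sa by (simp add: field_simps)
qed

lemma cluster:
  fixes \<mu> lam :: "nat \<Rightarrow> real"
  assumes g: "g > 0" and \<kappa>: "0 \<le> \<kappa>" "\<kappa> \<le> g / 4"
    and gap: "\<forall>i<n. \<forall>j<n. \<mu> i \<noteq> \<mu> j \<longrightarrow> g \<le> \<bar>\<mu> i - \<mu> j\<bar>"
    and s2: "\<forall>j<n. \<exists>k<n. \<bar>lam k - \<mu> j\<bar> \<le> \<kappa>"
    and s1: "\<forall>k<n. \<exists>j<n. \<bar>lam k - \<mu> j\<bar> \<le> \<kappa>"
    and card: "card (lam ` {..<n}) \<le> card (\<mu> ` {..<n})"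
  shows "card (lam ` {..<n}) = card (\<mu> ` {..<n})"
    and "\<forall>j<n. \<forall>k<n. \<forall>k'<n. \<bar>lam k - \<mu> j\<bar> \<le> \<kappa> \<longrightarrow> \<bar>lam k' - \<mu> j\<bar> \<le> \<kappa> \<longrightarrow> lam k = lam k'"
proof -
  let ?M = "\<mu> ` {..<n}" and ?L = "lam ` {..<n}"
  define \<psi> where "\<psi> x = (SOME y. y \<in> ?L \<and> \<bar>y - x\<bar> \<le> \<kappa>)" for x
  have psi: "\<psi> x \<in> ?L \<and> \<bar>\<psi> x - x\<bar> \<le> \<kappa>" if "x \<in> ?M" for x
  proof -
    from that obtain j where j: "j < n" "x = \<mu> j" by auto
    from s2 j obtain k where "k < n" "\<bar>lam k - \<mu> j\<bar> \<le> \<kappa>" by auto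
    hence "\<exists>y. y \<in> ?L \<and> \<bar>y - x\<bar> \<le> \<kappa>" using j by auto
    thus ?thesis unfolding \<psi>_def by (rule someI_ex)
  qed
  have close_eq: "x = x'" if xM: "x \<in> ?M" and x'M: "x' \<in> ?M" and c1: "\<bar>y - x\<bar> \<le> \<kappa>" and c2: "\<bar>y - x'\<bar> \<le> \<kappa>" for x x' y
  proof (rule ccontr)
    assume ne: "x \<noteq> x'"
    obtain i where i: "i < n" "x = \<mu> i" using xM by auto
    obtain i' where i': "i' < n" "x' = \<mu> i'" using x'M by auto
    have "g \<le> \<bar>x - x'\<bar>" using gap ne i i' by auto
    thus False using c1 c2 g \<kappa> by linarith
  qed
  have inj: "inj_on \<psi> ?M"
  proof (rule inj_onI)
    fix x x' assume "x \<in> ?M" "x' \<in> ?M" "\<psi> x = \<psi> x'"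
    thus "x = x'" using psi close_eq by metis
  qed
  have sub: "\<psi> ` ?M \<subseteq> ?L" using psi by auto
  have cM: "card (\<psi> ` ?M) = card ?M" using card_image[OF inj] .
  have "card ?M \<le> card ?L" using cM card_mono[OF _ sub] by simp
  thus c: "card ?L = card ?M" using card by simp
  have eqL: "\<psi> ` ?M = ?L" using card_subset_eq[OF _ sub] c cM by simp
  show "\<forall>j<n. \<forall>k<n. \<forall>k'<n. \<bar>lam k - \<mu> j\<bar> \<le> \<kappa> \<longrightarrow> \<bar>lam k' - \<mu> j\<bar> \<le> \<kappa> \<longrightarrow> lam k = lam k'"
  proof (intro allI impI)
    fix j k k' assume j: "j < n" and k: "k < n" and k': "k' < n"
      and c1: "\<bar>lam k - \<mu> j\<bar> \<le> \<kappa>" and c2: "\<bar>lam k' - \<mu> j\<bar> \<le> \<kappa>"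
    have "lam k \<in> \<psi> ` ?M" using eqL k by auto
    then obtain x where x: "x \<in> ?M" "lam k = \<psi> x" by auto
    have "x = \<mu> j" using close_eq[of x "\<mu> j" "lam k"] x psi[OF x(1)] c1 j by auto
    have "lam k' \<in> \<psi> ` ?M" using eqL k' by auto
    then obtain x' where x': "x' \<in> ?M" "lam k' = \<psi> x'" by auto
    have "x' = \<mu> j" using close_eq[of x' "\<mu> j" "lam k'"] x' psi[OF x'(1)] c2 j by auto
    show "lam k = lam k'" using x x' \<open>x = \<mu> j\<close> \<open>x' = \<mu> j\<close> by simp
  qed
qed

lemma mult_entry:
  assumes A: "A \<in> carrier_mat p q" and B: "B \<in> carrier_mat q r" and i: "i < p" and j: "j < r"
  shows "(A * B) $$ (i,j) = (\<Sum>l<q. A $$ (i,l) * B $$ (l,j))"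
  using A B i j by (simp add: scalar_prod_def atLeast0LessThan)

lemma MC_card:
  assumes BM: "B \<in> M_C n m ls" and pos: "\<forall>j<length ls. 1 \<le> ls ! j"
    and on: "orthonormal n n v" and ev: "\<forall>k<n. eig (B * ctrans B) (complex_of_real (lam k)) (v k)"
    and nn: "\<forall>k<n. 0 \<le> lam k"
  shows "card (lam ` {..<n}) \<le> n - (\<Sum>j<length ls. ls ! j - 1)"
proof -
  have B: "B \<in> carrier_mat n m" using BM unfolding M_C_def by simp
  define H where "H = B * ctrans B"
  have Hc: "H \<in> carrier_mat n n" unfolding H_def using gram_carrier[OF B] .
  define U where "U = matf n n v"
  have Uu: "U \<in> unitary_mat n" unfolding U_def by (rule orthonormal_unitary[OF on])
  have Uc: "U \<in> carrier_mat n n" unfolding U_def by simp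
  have UcU: "U * ctrans U = 1\<^sub>m n" "ctrans U * U = 1\<^sub>m n" using Uu unfolding unitary_mat_def by auto
  have cUc: "ctrans U \<in> carrier_mat n n" using ctrans_carrier'[OF Uc] .
  define L where "L = mat n n (\<lambda>(i,j). if i = j then complex_of_real (lam i) else 0)"
  have Lc: "L \<in> carrier_mat n n" unfolding L_def by simp
  have HU: "H * U = U * L"
  proof (rule eq_matI)
    fix i k assume i0: "i < dim_row (U * L)" and k0: "k < dim_col (U * L)"
    have i: "i < n" and k: "k < n" using i0 k0 Uc Lc by auto
    have "(H * U) $$ (i,k) = (\<Sum>l<n. H $$ (i,l) * v k l)"
      using mult_entry[OF Hc Uc i k] unfolding U_def by (simp add: i k)
    also have "\<dots> = mv H (v k) i" unfolding mv_def using Hc i by simp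
    also have "\<dots> = complex_of_real (lam k) * v k i" using ev k i Hc unfolding eig_def H_def by auto
    also have "\<dots> = (\<Sum>l<n. U $$ (i,l) * L $$ (l,k))"
    proof -
      have "(\<Sum>l<n. U $$ (i,l) * L $$ (l,k)) = (\<Sum>l<n. if l = k then v k i * complex_of_real (lam k) else 0)"
        unfolding U_def L_def using i k by (intro sum.cong, auto)
      also have "\<dots> = complex_of_real (lam k) * v k i" using k by simp
      finally show ?thesis by simp
    qed
    also have "\<dots> = (U * L) $$ (i,k)" using mult_entry[OF Uc Lc i k] by simp
    finally show "(H * U) $$ (i,k) = (U * L) $$ (i,k)" .
  qed (insert Hc Uc Lc, auto)
  have HUL: "H = U * L * ctrans U"
  proof -
    have "H = H * (U * ctrans U)" using UcU Hc by simp
    also have "\<dots> = (H * U) * ctrans U" using assoc_mult_mat[OF Hc Uc cUc] by simp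
    finally show ?thesis unfolding HU .
  qed
  have "similar_mat H L"
    unfolding similar_mat_def similar_mat_wit_def Let_def
    by (rule exI[of _ U], rule exI[of _ "ctrans U"], insert Hc Lc Uc cUc UcU HUL, auto)
  hence cpH: "char_poly H = char_poly L" by (rule char_poly_similar)
  have utL: "upper_triangular L" unfolding L_def upper_triangular_def by auto
  have dL: "diag_mat L = map (\<lambda>k. complex_of_real (lam k)) [0..<n]" unfolding L_def diag_mat_def by simp
  have cp: "char_poly H = (\<Prod>k\<leftarrow>[0..<n]. [:- complex_of_real (lam k), 1:])"
    unfolding cpH char_poly_upper_triangular[OF Lc utL] dL by (simp add: o_def)
  define s0 where "s0 = sort (map (\<lambda>k. sqrt (lam k)) [0..<n])"
  define f where "f v = [:- complex_of_real (v\<^sup>2), 1:]" for v :: real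
  define P where "P s = (length s = dim_row B \<and> sorted s \<and> (\<forall>v\<in>set s. 0 \<le> v) \<and>
      char_poly (B * ctrans B) = (\<Prod>v\<leftarrow>s. [:- complex_of_real (v\<^sup>2), 1:]))" for s
  have prod_sort: "prod_list (map g (sort xs)) = prod_list (map g xs)" for g :: "real \<Rightarrow> complex poly" and xs
  proof -
    have "prod_list (map g (sort xs)) = prod_mset (mset (map g (sort xs)))" by (simp only: prod_mset_prod_list)
    also have "\<dots> = prod_mset (mset (map g xs))" by simp
    also have "\<dots> = prod_list (map g xs)" by (simp only: prod_mset_prod_list)
    finally show ?thesis .
  qed
  have Ps0: "P s0"
  proof -
    have "length s0 = dim_row B" unfolding s0_def using B by simp
    moreover have "sorted s0" unfolding s0_def by simp
    moreover have "\<forall>v\<in>set s0. 0 \<le> v" unfolding s0_def using nn by auto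
    moreover have "(\<Prod>v\<leftarrow>s0. [:- complex_of_real (v\<^sup>2), 1:]) = char_poly (B * ctrans B)"
    proof -
      have "(\<Prod>v\<leftarrow>s0. [:- complex_of_real (v\<^sup>2), 1:]) = prod_list (map f (map (\<lambda>k. sqrt (lam k)) [0..<n]))"
        unfolding s0_def f_def[abs_def] by (rule prod_sort)
      also have "\<dots> = (\<Prod>k\<leftarrow>[0..<n]. [:- complex_of_real (lam k), 1:])"
        unfolding f_def map_map o_def using nn by (intro arg_cong[where f = prod_list] map_cong, auto)
      finally show ?thesis using cp unfolding H_def by simp
    qed
    ultimately show ?thesis unfolding P_def by simp
  qed
  have uniq: "s = s0" if Ps: "P s" for s
  proof -
    have "(\<Prod>v\<leftarrow>s. [:- complex_of_real (v\<^sup>2), 1:]) = (\<Prod>v\<leftarrow>s0. [:- complex_of_real (v\<^sup>2), 1:])"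
      using Ps Ps0 unfolding P_def by simp
    hence "(\<Prod>a\<leftarrow>map (\<lambda>v. complex_of_real (v\<^sup>2)) s. [:- a, 1:]) = (\<Prod>a\<leftarrow>map (\<lambda>v. complex_of_real (v\<^sup>2)) s0. [:- a, 1:])"
      by (simp add: map_map o_def)
    hence ms: "mset (map (\<lambda>v. complex_of_real (v\<^sup>2)) s) = mset (map (\<lambda>v. complex_of_real (v\<^sup>2)) s0)"
      by (rule prod_linear_mset)
    define h where "h z = sqrt (Re z)" for z :: complex
    have "mset s = mset (map h (map (\<lambda>v. complex_of_real (v\<^sup>2)) s))"
      using Ps unfolding P_def h_def by (simp add: map_map o_def map_idI)
    also have "\<dots> = image_mset h (mset (map (\<lambda>v. complex_of_real (v\<^sup>2)) s))" by (simp only: mset_map)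
    also have "\<dots> = image_mset h (mset (map (\<lambda>v. complex_of_real (v\<^sup>2)) s0))" unfolding ms ..
    also have "\<dots> = mset (map h (map (\<lambda>v. complex_of_real (v\<^sup>2)) s0))" by (simp only: mset_map)
    also have "\<dots> = mset s0" using Ps0 unfolding P_def h_def by (simp add: map_map o_def map_idI)
    finally have "mset s = mset s0" .
    hence "sort s0 = s" using Ps unfolding P_def by (intro properties_for_sort, auto)
    moreover have "sort s0 = s0" using Ps0 unfolding P_def by (intro properties_for_sort, auto)
    ultimately show ?thesis by simp
  qed
  have sv: "sing_vals B = s0"
    unfolding sing_vals_def P_def[symmetric]
    by (rule the1_equality, rule ex1I[of _ s0], rule Ps0, erule uniq, rule Ps0)
  obtain J where J: "\<forall>j<length ls. J j \<subseteq> {0..<n} \<and> card (J j) = ls ! j"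
    and disj: "\<forall>j<length ls. \<forall>k<length ls. j \<noteq> k \<longrightarrow> J j \<inter> J k = {}"
    and eq: "\<forall>j<length ls. \<forall>i\<in>J j. \<forall>i'\<in>J j. s0 ! i = s0 ! i'"
    using BM sv unfolding M_C_def by auto
  have cb: "card ((\<lambda>i. s0 ! i) ` {..<n}) \<le> n - (\<Sum>j<length ls. ls ! j - 1)"
    by (rule card_bound[OF J disj eq pos])
  have len: "length s0 = n" unfolding s0_def by simp
  have setS: "(\<lambda>i. s0 ! i) ` {..<n} = set s0" unfolding set_conv_nth len by auto
  have "lam ` {..<n} = (\<lambda>x. x\<^sup>2) ` set s0"
  proof -
    have "set s0 = (\<lambda>k. sqrt (lam k)) ` {..<n}" unfolding s0_def by auto
    hence "(\<lambda>x. x\<^sup>2) ` set s0 = (\<lambda>k. (sqrt (lam k))\<^sup>2) ` {..<n}" by auto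
    also have "\<dots> = lam ` {..<n}" using nn by (intro image_cong, auto)
    finally show ?thesis by simp
  qed
  hence "card (lam ` {..<n}) \<le> card (set s0)" by (simp add: card_image_le)
  thus ?thesis using cb setS by simp
qed

lemma gram_diff_bound:
  assumes A: "A \<in> carrier_mat n m" and B: "B \<in> carrier_mat n m"
    and cA: "\<forall>i<n. \<forall>k<m. cmod (A $$ (i,k)) \<le> c"
    and dAB: "\<forall>i<n. \<forall>k<m. cmod (A $$ (i,k) - B $$ (i,k)) \<le> \<delta>" and d1: "\<delta> \<le> 1"
  shows "nrm n (\<lambda>i. mv (B * ctrans B) x i - mv (A * ctrans A) x i) \<le> (real m * \<delta> * (2 * c + 1)) * (real n * real n) * nrm n x"
proof -
  have HA: "A * ctrans A \<in> carrier_mat n n" using gram_carrier[OF A] .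
  have HB: "B * ctrans B \<in> carrier_mat n n" using gram_carrier[OF B] .
  have "(\<lambda>i. mv (B * ctrans B) x i - mv (A * ctrans A) x i) = mv (B * ctrans B - A * ctrans A) x"
    using mv_mat_diff[OF HB HA] by simp
  moreover have "nrm n (mv (B * ctrans B - A * ctrans A) x) \<le> (real m * \<delta> * (2 * c + 1)) * (real n * real n) * nrm n x"
  proof (rule mv_bound)
    show "B * ctrans B - A * ctrans A \<in> carrier_mat n n" using HA HB unfolding carrier_mat_def by auto
    fix i k assume i: "i < n" and k: "k < n"
    have eA: "(A * ctrans A) $$ (i,k) = (\<Sum>l<m. A $$ (i,l) * cnj (A $$ (k,l)))"
      using mult_entry[OF A ctrans_carrier'[OF A] i k] A k by simp
    have eB: "(B * ctrans B) $$ (i,k) = (\<Sum>l<m. B $$ (i,l) * cnj (B $$ (k,l)))"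
      using mult_entry[OF B ctrans_carrier'[OF B] i k] B k by simp
    have "(B * ctrans B - A * ctrans A) $$ (i,k) = (\<Sum>l<m. B $$ (i,l) * cnj (B $$ (k,l)) - A $$ (i,l) * cnj (A $$ (k,l)))"
    proof -
      have dA: "dim_row (A * ctrans A) = n" "dim_col (A * ctrans A) = n" using HA by auto
      have "(B * ctrans B - A * ctrans A) $$ (i,k) = (B * ctrans B) $$ (i,k) - (A * ctrans A) $$ (i,k)"
        using dA i k by simp
      thus ?thesis unfolding eA eB by (simp add: sum_subtractf)
    qed
    also have "cmod \<dots> \<le> (\<Sum>l<m. cmod (B $$ (i,l) * cnj (B $$ (k,l)) - A $$ (i,l) * cnj (A $$ (k,l))))"
      by (rule norm_sum)
    also have "\<dots> \<le> (\<Sum>l<m. \<delta> * (2 * c + 1))"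
    proof (rule sum_mono)
      fix l assume "l \<in> {..<m}"
      hence l: "l < m" by simp
      have a1: "cmod (A $$ (i,l)) \<le> c" "cmod (A $$ (k,l)) \<le> c" using cA i k l by auto
      have d1': "cmod (B $$ (i,l) - A $$ (i,l)) \<le> \<delta>" "cmod (B $$ (k,l) - A $$ (k,l)) \<le> \<delta>"
        using dAB i k l by (auto simp: norm_minus_commute)
      have b2: "cmod (B $$ (k,l)) \<le> c + 1"
      proof -
        have "cmod (B $$ (k,l)) \<le> cmod (A $$ (k,l)) + cmod (B $$ (k,l) - A $$ (k,l))"
          using norm_triangle_ineq[of "A $$ (k,l)" "B $$ (k,l) - A $$ (k,l)"] by simp
        thus ?thesis using a1 d1' d1 by linarith
      qed
      have "B $$ (i,l) * cnj (B $$ (k,l)) - A $$ (i,l) * cnj (A $$ (k,l))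
          = (B $$ (i,l) - A $$ (i,l)) * cnj (B $$ (k,l)) + A $$ (i,l) * cnj (B $$ (k,l) - A $$ (k,l))"
        by (simp add: algebra_simps)
      hence "cmod (B $$ (i,l) * cnj (B $$ (k,l)) - A $$ (i,l) * cnj (A $$ (k,l)))
          \<le> cmod (B $$ (i,l) - A $$ (i,l)) * cmod (B $$ (k,l)) + cmod (A $$ (i,l)) * cmod (B $$ (k,l) - A $$ (k,l))"
        by (metis complex_mod_cnj norm_mult norm_triangle_ineq)
      also have "\<dots> \<le> \<delta> * (c + 1) + c * \<delta>"
        using a1 d1' b2 by (intro add_mono mult_mono, auto intro: order_trans[OF norm_ge_zero])
      also have "\<dots> = \<delta> * (2 * c + 1)" by (simp add: algebra_simps)
      finally show "cmod (B $$ (i,l) * cnj (B $$ (k,l)) - A $$ (i,l) * cnj (A $$ (k,l))) \<le> \<delta> * (2 * c + 1)" .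
    qed
    also have "\<dots> = real m * \<delta> * (2 * c + 1)" by simp
    finally show "cmod ((B * ctrans B - A * ctrans A) $$ (i,k)) \<le> real m * \<delta> * (2 * c + 1)" .
  qed
  ultimately show ?thesis by simp
qed

lemma nrm_orth_one: "orthonormal n N v \<Longrightarrow> j < N \<Longrightarrow> nrm n (v j) = 1"
  by (rule nrm_one, auto simp: orthonormal_def)

lemma main_B:
  fixes n m :: nat and ls :: "nat list" and A PL D PR B :: "complex mat"
    and \<sigma> \<mu> :: "nat \<Rightarrow> real" and m0 g cA CL CR \<kappa> \<tau> \<delta> \<epsilon> :: real
  assumes n1: "1 \<le> n" and nm: "n \<le> m"
    and pos: "\<forall>j<length ls. 1 \<le> ls ! j"
    and Ac: "A \<in> carrier_mat n m"
    and PL: "PL \<in> unitary_mat n" and PR: "PR \<in> unitary_mat m" and D: "D \<in> real_diag_mat n m"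
    and AD: "A = PL * D * ctrans PR"
    and \<sigma>_def: "\<forall>j. \<sigma> j = Re (D $$ (j,j))" and \<mu>_def: "\<forall>j. \<mu> j = (\<sigma> j)\<^sup>2"
    and m0: "0 < m0" "\<forall>j<n. m0 \<le> \<mu> j"
    and g: "0 < g" "\<forall>i<n. \<forall>j<n. \<mu> i \<noteq> \<mu> j \<longrightarrow> g \<le> \<bar>\<mu> i - \<mu> j\<bar>"
    and cardmu: "card (\<mu> ` {..<n}) = n - (\<Sum>j<length ls. ls ! j - 1)"
    and cA: "0 \<le> cA" "\<forall>i<n. \<forall>k<m. cmod (A $$ (i,k)) \<le> cA"
    and CL: "0 < CL" "gs_prop CL n n" and CR: "0 < CR" "gs_prop CR m m"
    and k1: "0 < \<kappa>" "\<kappa> \<le> g / 4" "\<kappa> \<le> m0 / 2"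
    and k2: "\<kappa> / sqrt m0 < \<epsilon>"
    and k3: "\<kappa> / sqrt m0 \<le> \<tau> * sqrt (m0 / 2) / 3"
    and k4: "CL * (2 * \<kappa> / g) \<le> 1"
    and k5: "CL * (2 * \<kappa> / g) < \<epsilon>"
    and k6: "cA * (real m * real n) * (CL * (2 * \<kappa> / g)) \<le> \<tau> * sqrt (m0 / 2) / 3"
    and t1: "0 < \<tau>" "CR * \<tau> \<le> 1" "CR * \<tau> < \<epsilon>"
    and d1: "0 < \<delta>" "\<delta> \<le> 1"
    and d2: "real m * \<delta> * (2 * cA + 1) * (real n * real n) \<le> \<kappa>"
    and d3: "\<delta> * (real m * real n) \<le> \<tau> * sqrt (m0 / 2) / 3"
    and BM: "B \<in> M_C n m ls"
    and close: "\<forall>i<n. \<forall>j<m. cmod (A $$ (i,j) - B $$ (i,j)) < \<delta>"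
  shows "\<not> eigenvalue (B * ctrans B) 0 \<and>
         card {z. eigenvalue (B * ctrans B) z} = n - (\<Sum>j<length ls. ls ! j - 1) \<and>
         (\<exists>QL F QR. QL \<in> unitary_mat n \<and> QR \<in> unitary_mat m \<and> F \<in> real_diag_mat n m \<and>
            B = QL * F * ctrans QR \<and>
            (\<forall>i<n. cmod (D $$ (i,i) - F $$ (i,i)) < \<epsilon>) \<and>
            (\<forall>i<n. \<forall>j<n. cmod (QL $$ (i,j) - PL $$ (i,j)) < \<epsilon>) \<and>
            (\<forall>i<m. \<forall>j<m. cmod (QR $$ (i,j) - PR $$ (i,j)) < \<epsilon>))"
proof -
  have PLc: "PL \<in> carrier_mat n n" using PL unfolding unitary_mat_def by simp
  have PRc: "PR \<in> carrier_mat m m" using PR unfolding unitary_mat_def by simp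
  have Bc: "B \<in> carrier_mat n m" using BM unfolding M_C_def by simp
  define u where "u = colf PL"
  define p where "p = colf PR"
  have onu: "orthonormal n n u" unfolding u_def by (rule unitary_orthonormal[OF PL])
  have onp: "orthonormal m m p" unfolding p_def by (rule unitary_orthonormal[OF PR])
  have F1: "\<forall>i<m. mv (ctrans A) (u j) i = complex_of_real (\<sigma> j) * p j i" if j: "j < n" for j
    using svd_cols(1)[OF PL PR D nm AD j] \<sigma>_def unfolding u_def p_def by simp
  have F2: "\<forall>i<n. mv A (p j) i = complex_of_real (\<sigma> j) * u j i" if j: "j < n" for j
    using svd_cols(2)[OF PL PR D nm AD j] \<sigma>_def unfolding u_def p_def by simp
  define H where "H = A * ctrans A"
  have Hc: "H \<in> carrier_mat n n" unfolding H_def by (rule gram_carrier[OF Ac])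
  have hermH: "ctrans H = H" unfolding H_def by (rule herm_gram[OF Ac])
  have eigH: "eig H (complex_of_real (\<mu> j)) (u j)" if j: "j < n" for j
    unfolding eig_def
  proof (intro allI impI)
    fix i assume "i < dim_row H"
    hence i: "i < n" using Hc by simp
    have "mv H (u j) = mv A (mv (ctrans A) (u j))" unfolding H_def by (rule mv_mult[OF Ac ctrans_carrier'[OF Ac]])
    also have "\<dots> = mv A (\<lambda>i. complex_of_real (\<sigma> j) * p j i)" using F1[OF j] Ac by (intro mv_cong, auto)
    also have "\<dots> = (\<lambda>i. complex_of_real (\<sigma> j) * mv A (p j) i)" by (rule mv_scale)
    finally have "mv H (u j) i = complex_of_real (\<sigma> j) * (complex_of_real (\<sigma> j) * u j i)" using F2[OF j] i by simp
    thus "mv H (u j) i = complex_of_real (\<mu> j) * u j i" using \<mu>_def by (simp add: power2_eq_square)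
  qed
  interpret sA: spec H n u \<mu> using Hc onu eigH by (unfold_locales, auto)
  define H' where "H' = B * ctrans B"
  have H'c: "H' \<in> carrier_mat n n" unfolding H'_def by (rule gram_carrier[OF Bc])
  have hermH': "ctrans H' = H'" unfolding H'_def by (rule herm_gram[OF Bc])
  obtain v lam where onv: "orthonormal n n v" and eigv: "\<forall>k<n. eig H' (complex_of_real (lam k)) (v k)"
    using spectral[OF H'c hermH'] by blast
  interpret sB: spec H' n v lam using H'c onv eigv by (unfold_locales, auto)
  have lam0: "\<forall>k<n. 0 \<le> lam k"
  proof (intro allI impI)
    fix k assume k: "k < n"
    have "lam k = (nrm m (mv (ctrans B) (v k)))\<^sup>2"
      by (rule psd_eig[OF Bc], insert eigv k nrm_orth_one[OF onv k], auto simp: H'_def)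
    thus "0 \<le> lam k" by simp
  qed
  have Ebound: "nrm n (\<lambda>i. mv H' x i - mv H x i) \<le> \<kappa> * nrm n x" for x
  proof -
    have "nrm n (\<lambda>i. mv H' x i - mv H x i) \<le> (real m * \<delta> * (2 * cA + 1)) * (real n * real n) * nrm n x"
      unfolding H_def H'_def
      by (rule gram_diff_bound[OF Ac Bc cA(2) _ d1(2)], insert close, auto simp: less_imp_le)
    also have "\<dots> \<le> \<kappa> * nrm n x" using d2 by (intro mult_right_mono, auto)
    finally show ?thesis .
  qed
  have Ebound': "nrm n (\<lambda>i. mv H x i - mv H' x i) \<le> \<kappa> * nrm n x" for x
    using Ebound[of x] nrm_diff_sym[of n "mv H' x" "mv H x"] by simp
  have s1: "\<forall>k<n. \<exists>j<n. \<bar>lam k - \<mu> j\<bar> \<le> \<kappa>"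
  proof (intro allI impI)
    fix k assume k: "k < n"
    have v1: "nrm n (v k) = 1" by (rule nrm_orth_one[OF onv k])
    obtain j where j: "j < n" "\<bar>\<mu> j - lam k\<bar> \<le> nrm n (\<lambda>i. mv H (v k) i - complex_of_real (lam k) * v k i)"
      using sA.near_eigenvalue[OF v1, of "lam k"] by auto
    have "nrm n (\<lambda>i. mv H (v k) i - complex_of_real (lam k) * v k i) = nrm n (\<lambda>i. mv H (v k) i - mv H' (v k) i)"
      using eigv k H'c unfolding eig_def by (intro nrm_cong, auto)
    also have "\<dots> \<le> \<kappa>" using Ebound'[of "v k"] v1 by simp
    finally show "\<exists>j<n. \<bar>lam k - \<mu> j\<bar> \<le> \<kappa>" using j by (auto simp: abs_minus_commute)
  qed
  have Hu: "nrm n (\<lambda>i. mv H' (u j) i - complex_of_real (\<mu> j) * u j i) \<le> \<kappa>" if j: "j < n" for j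
  proof -
    have u1: "nrm n (u j) = 1" by (rule nrm_orth_one[OF onu j])
    have "nrm n (\<lambda>i. mv H' (u j) i - complex_of_real (\<mu> j) * u j i) = nrm n (\<lambda>i. mv H' (u j) i - mv H (u j) i)"
      using eigH[OF j] Hc unfolding eig_def by (intro nrm_cong, auto)
    also have "\<dots> \<le> \<kappa>" using Ebound[of "u j"] u1 by simp
    finally show ?thesis .
  qed
  have s2: "\<forall>j<n. \<exists>k<n. \<bar>lam k - \<mu> j\<bar> \<le> \<kappa>"
  proof (intro allI impI)
    fix j assume j: "j < n"
    have u1: "nrm n (u j) = 1" by (rule nrm_orth_one[OF onu j])
    obtain k where "k < n" "\<bar>lam k - \<mu> j\<bar> \<le> nrm n (\<lambda>i. mv H' (u j) i - complex_of_real (\<mu> j) * u j i)"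
      using sB.near_eigenvalue[OF u1, of "\<mu> j"] by auto
    thus "\<exists>k<n. \<bar>lam k - \<mu> j\<bar> \<le> \<kappa>" using Hu[OF j] by force
  qed
  have cardlam: "card (lam ` {..<n}) \<le> card (\<mu> ` {..<n})"
    using MC_card[OF BM pos onv _ lam0] eigv cardmu unfolding H'_def by simp
  have k0: "0 \<le> \<kappa>" using k1 by simp
  note cl = cluster[OF g(1) k0 k1(2) g(2) s2 s1 cardlam]
  have evs: "{z. eigenvalue H' z} = (\<lambda>k. complex_of_real (lam k)) ` {..<n}" by (rule sB.ev_set[OF hermH'])
  have lam_pos: "m0 / 2 \<le> lam k" if k: "k < n" for k
  proof -
    obtain j where j: "j < n" "\<bar>lam k - \<mu> j\<bar> \<le> \<kappa>" using s1 k by auto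
    thus ?thesis using m0(2) k1(3) by force
  qed
  have concl1: "\<not> eigenvalue (B * ctrans B) 0"
  proof
    assume "eigenvalue (B * ctrans B) 0"
    hence "0 \<in> (\<lambda>k. complex_of_real (lam k)) ` {..<n}" using evs unfolding H'_def by blast
    then obtain k where k: "k < n" "lam k = 0" by auto
    thus False using lam_pos[OF k(1)] m0(1) by simp
  qed
  have concl2: "card {z. eigenvalue (B * ctrans B) z} = n - (\<Sum>j<length ls. ls ! j - 1)"
  proof -
    have "card {z. eigenvalue (B * ctrans B) z} = card ((\<lambda>k. complex_of_real (lam k)) ` {..<n})"
      using evs unfolding H'_def by simp
    also have "(\<lambda>k. complex_of_real (lam k)) ` {..<n} = complex_of_real ` (lam ` {..<n})" by auto
    also have "card \<dots> = card (lam ` {..<n})" by (rule card_image, simp add: inj_on_def)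
    also have "\<dots> = card (\<mu> ` {..<n})" by (rule cl(1))
    finally show ?thesis using cardmu by simp
  qed
  define kk where "kk j = (SOME k. k < n \<and> \<bar>lam k - \<mu> j\<bar> \<le> \<kappa>)" for j
  have kk: "kk j < n \<and> \<bar>lam (kk j) - \<mu> j\<bar> \<le> \<kappa>" if j: "j < n" for j
    unfolding kk_def by (rule someI_ex, insert s2 j, auto)
  define \<nu> where "\<nu> j = lam (kk j)" for j
  have \<nu>close: "\<bar>\<nu> j - \<mu> j\<bar> \<le> \<kappa>" if "j < n" for j using kk[OF that] unfolding \<nu>_def by simp
  have \<nu>pos: "m0 / 2 \<le> \<nu> j" if "j < n" for j using lam_pos kk[OF that] unfolding \<nu>_def by simp
  define Sj where "Sj j = {k. k < n \<and> lam k = \<nu> j}" for j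
  have far: "g / 2 \<le> \<bar>lam k - \<mu> j\<bar>" if j: "j < n" and k: "k < n" and nS: "k \<notin> Sj j" for j k
  proof -
    obtain i where i: "i < n" "\<bar>lam k - \<mu> i\<bar> \<le> \<kappa>" using s1 k by auto
    have "\<mu> i \<noteq> \<mu> j"
    proof
      assume eq: "\<mu> i = \<mu> j"
      have "lam k = lam (kk j)" using cl(2) j k kk[OF j] i eq by auto
      thus False using nS k unfolding Sj_def \<nu>_def by simp
    qed
    hence "g \<le> \<bar>\<mu> i - \<mu> j\<bar>" using g(2) i j by auto
    thus ?thesis using i k1 by linarith
  qed
  define \<eta> where "\<eta> = 2 * \<kappa> / g"
  have \<eta>0: "0 \<le> \<eta>" unfolding \<eta>_def using k1 g by simp
  define w where "w j = (\<lambda>i. \<Sum>k\<in>Sj j. ip n (v k) (u j) * v k i)" for j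
  have wu: "nrm n (\<lambda>i. w j i - u j i) \<le> \<eta>" if j: "j < n" for j
  proof -
    have Ssub: "Sj j \<subseteq> {..<n}" unfolding Sj_def by auto
    let ?a = "\<lambda>k. (cmod (ip n (v k) (u j)))\<^sup>2"
    have "(nrm n (\<lambda>i. u j i - w j i))\<^sup>2 = (\<Sum>k\<in>{..<n} - Sj j. ?a k)"
      unfolding w_def by (rule sB.proj_error[OF Ssub])
    also have "\<dots> \<le> (\<Sum>k\<in>{k. k < n \<and> g / 2 \<le> \<bar>lam k - \<mu> j\<bar>}. ?a k)"
    proof (rule sum_mono2)
      show "{..<n} - Sj j \<subseteq> {k. k < n \<and> g / 2 \<le> \<bar>lam k - \<mu> j\<bar>}"
      proof
        fix k assume "k \<in> {..<n} - Sj j"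
        hence "k < n" "k \<notin> Sj j" by auto
        thus "k \<in> {k. k < n \<and> g / 2 \<le> \<bar>lam k - \<mu> j\<bar>}" using far[OF j] by auto
      qed
    qed auto
    finally have a: "(nrm n (\<lambda>i. u j i - w j i))\<^sup>2 \<le> (\<Sum>k\<in>{k. k < n \<and> g / 2 \<le> \<bar>lam k - \<mu> j\<bar>}. ?a k)" .
    have b: "(\<Sum>k\<in>{k. k < n \<and> g / 2 \<le> \<bar>lam k - \<mu> j\<bar>}. ?a k) * (g / 2)\<^sup>2
        \<le> (nrm n (\<lambda>i. mv H' (u j) i - complex_of_real (\<mu> j) * u j i))\<^sup>2"
      by (rule sB.far_weight, insert g, simp)
    have c: "(nrm n (\<lambda>i. mv H' (u j) i - complex_of_real (\<mu> j) * u j i))\<^sup>2 \<le> \<kappa>\<^sup>2"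
      using Hu[OF j] by (intro power_mono, auto)
    have "(nrm n (\<lambda>i. u j i - w j i))\<^sup>2 * (g / 2)\<^sup>2 \<le> \<kappa>\<^sup>2"
      using a b c by (meson dual_order.trans mult_right_mono zero_le_power2)
    hence "(nrm n (\<lambda>i. u j i - w j i) * (g / 2))\<^sup>2 \<le> \<kappa>\<^sup>2" by (simp only: power_mult_distrib)
    hence h: "nrm n (\<lambda>i. u j i - w j i) * (g / 2) \<le> \<kappa>" by (rule power2_le_imp_le, insert k1, simp)
    have "nrm n (\<lambda>i. u j i - w j i) \<le> \<kappa> / (g / 2)" using h g(1) by (simp only: pos_le_divide_eq half_gt_zero)
    hence "nrm n (\<lambda>i. u j i - w j i) \<le> \<eta>" unfolding \<eta>_def by (simp add: mult.commute)
    thus ?thesis using nrm_diff_sym[of n "w j" "u j"] by simp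
  qed
  have eigw: "eig H' (complex_of_real (\<nu> j)) (w j)" if "j < n" for j
    unfolding w_def by (rule sB.eig_proj, auto simp: Sj_def)
  have CLeta: "CL * \<eta> \<le> 1" using k4 unfolding \<eta>_def .
  obtain q where onq: "orthonormal n n q" and eigq: "\<forall>j<n. eig H' (complex_of_real (\<nu> j)) (q j)"
    and qu: "\<forall>j<n. nrm n (\<lambda>i. q j i - u j i) \<le> CL * \<eta>"
  proof -
    note G = CL(2)[unfolded gs_prop_def, THEN spec[of _ \<eta>], THEN spec[of _ w], THEN spec[of _ u],
        THEN spec[of _ "eig H'"], THEN spec[of _ "\<lambda>j. complex_of_real (\<nu> j)"]]
    have E0: "\<forall>b. eig H' b (\<lambda>i. 0)" by (intro allI, rule eig_zero)
    have Eadd: "\<forall>b x y. eig H' b x \<longrightarrow> eig H' b y \<longrightarrow> eig H' b (\<lambda>i. x i + y i)"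
      by (intro allI impI, erule eig_add)
    have Ediff: "\<forall>b x y. eig H' b x \<longrightarrow> eig H' b y \<longrightarrow> eig H' b (\<lambda>i. x i - y i)"
      by (intro allI impI, erule eig_diff)
    have Escale: "\<forall>b a x. eig H' b x \<longrightarrow> eig H' b (\<lambda>i. a * x i)" by (intro allI impI, erule eig_scale)
    have Eorth: "\<forall>b b' x y. b \<noteq> b' \<longrightarrow> eig H' b x \<longrightarrow> eig H' b' y \<longrightarrow> ip n x y = 0"
      by (intro allI impI, rule eig_orth_gen[OF H'c hermH'])
    have wuA: "\<forall>j<n. nrm n (\<lambda>i. w j i - u j i) \<le> \<eta>" using wu by auto
    have EwA: "\<forall>j<n. eig H' (complex_of_real (\<nu> j)) (w j)" using eigw by auto
    have "\<exists>q. orthonormal n n q \<and> (\<forall>j<n. eig H' (complex_of_real (\<nu> j)) (q j)) \<and>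
          (\<forall>j<n. nrm n (\<lambda>i. q j i - u j i) \<le> CL * \<eta>) \<and>
          (\<forall>k\<le>n. orthonormal n k w \<longrightarrow> (\<forall>j<k. q j = w j))"
      by (rule G[THEN mp, THEN mp, THEN mp, THEN mp, THEN mp, THEN mp, THEN mp, THEN mp, THEN mp, THEN mp,
             OF \<eta>0 CLeta onu wuA EwA E0 Eadd Ediff Escale Eorth])
    thus ?thesis using that by blast
  qed
  define \<theta> where "\<theta> = CL * \<eta>"
  have sm0: "0 < sqrt m0" using m0(1) by simp
  define f0 where "f0 = sqrt (m0 / 2)"
  have f0pos: "0 < f0" unfolding f0_def using m0(1) by simp
  define f where "f j = (if 0 \<le> \<sigma> j then sqrt (\<nu> j) else - sqrt (\<nu> j))" for j
  have fabs: "\<bar>f j\<bar> = sqrt (\<nu> j)" if "j < n" for j using \<nu>pos[OF that] m0(1) unfolding f_def by auto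
  have fge: "f0 \<le> \<bar>f j\<bar>" if "j < n" for j unfolding fabs[OF that] f0_def using \<nu>pos[OF that] by simp
  have fne: "f j \<noteq> 0" if "j < n" for j using fge[OF that] f0pos by auto
  have fsq: "f j * f j = \<nu> j" if "j < n" for j using \<nu>pos[OF that] m0(1) unfolding f_def by auto
  have \<sigma>abs: "\<bar>\<sigma> j\<bar> = sqrt (\<mu> j)" for j using \<mu>_def by simp
  have \<sigma>f: "\<bar>\<sigma> j - f j\<bar> \<le> \<kappa> / sqrt m0" if j: "j < n" for j
  proof -
    have mu_pos: "0 < \<mu> j" using m0 j by force
    have "\<bar>\<sigma> j - f j\<bar> = \<bar>sqrt (\<mu> j) - sqrt (\<nu> j)\<bar>"
    proof (cases "0 \<le> \<sigma> j")
      case True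
      hence "\<sigma> j = sqrt (\<mu> j)" using \<sigma>abs[of j] by simp
      thus ?thesis using True unfolding f_def by simp
    next
      case False
      hence "\<sigma> j = - sqrt (\<mu> j)" using \<sigma>abs[of j] by simp
      hence "\<sigma> j - f j = - (sqrt (\<mu> j) - sqrt (\<nu> j))" using False unfolding f_def by simp
      thus ?thesis by (simp only: abs_minus_cancel)
    qed
    also have "\<dots> \<le> \<bar>\<mu> j - \<nu> j\<bar> / sqrt (\<mu> j)" by (rule sqrt_diff_le[OF mu_pos], insert \<nu>pos[OF j] m0(1), simp)
    also have "\<dots> \<le> \<kappa> / sqrt m0"
    proof (rule frac_le)
      show "\<bar>\<mu> j - \<nu> j\<bar> \<le> \<kappa>" using \<nu>close[OF j] by (simp add: abs_minus_commute)
      show "sqrt m0 \<le> sqrt (\<mu> j)" using m0(2) j by simp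
    qed (insert k1 sm0, auto)
    finally show ?thesis .
  qed
  have \<sigma>ne: "\<sigma> j \<noteq> 0" if j: "j < n" for j using m0 j \<mu>_def by force
  define r where "r j = (\<lambda>i. complex_of_real (1 / f j) * mv (ctrans B) (q j) i)" for j
  have cBc: "ctrans B \<in> carrier_mat m n" by (rule ctrans_carrier'[OF Bc])
  have cAc: "ctrans A \<in> carrier_mat m n" by (rule ctrans_carrier'[OF Ac])
  have ipBB: "ip m (mv (ctrans B) x) (mv (ctrans B) y) = ip n x (mv H' y)" for x y
  proof -
    have "ip m (mv (ctrans B) x) (mv (ctrans B) y) = ip n x (mv (ctrans (ctrans B)) (mv (ctrans B) y))"
      by (rule mv_adj[OF cBc])
    also have "\<dots> = ip n x (mv H' y)" unfolding H'_def ctrans_ctrans mv_mult[OF Bc cBc] ..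
    finally show ?thesis .
  qed
  have ron: "orthonormal m n r" unfolding orthonormal_def
  proof (intro allI impI)
    fix i j assume i: "i < n" and j: "j < n"
    have "ip m (r i) (r j) = complex_of_real (1 / f i) * complex_of_real (1 / f j) * ip n (q i) (mv H' (q j))"
      unfolding r_def ip_scale_left ip_scale_right ipBB by simp
    also have "ip n (q i) (mv H' (q j)) = complex_of_real (\<nu> j) * ip n (q i) (q j)"
      using eig_ip_right[OF H'c] eigq j by auto
    also have "ip n (q i) (q j) = (if i = j then 1 else 0)" using onq i j unfolding orthonormal_def by auto
    finally have "ip m (r i) (r j) = complex_of_real (1 / f i) * complex_of_real (1 / f j) * (complex_of_real (\<nu> j) * (if i = j then 1 else 0))" .
    moreover have "(1 / f j) * (1 / f j) * \<nu> j = 1"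
    proof -
      have "(1 / f j) * (1 / f j) * \<nu> j = (1 / f j) * (1 / f j) * (f j * f j)" using fsq[OF j] by simp
      also have "\<dots> = 1" using fne[OF j] by simp
      finally show ?thesis .
    qed
    ultimately show "ip m (r i) (r j) = (if i = j then 1 else 0)"
      by (cases "i = j", auto simp: of_real_mult[symmetric] simp del: of_real_mult)
  qed
  have \<theta>def: "\<theta> = CL * (2 * \<kappa> / g)" unfolding \<theta>_def \<eta>_def ..
  have pA: "p j i = complex_of_real (1 / \<sigma> j) * mv (ctrans A) (u j) i" if j: "j < n" and i: "i < m" for j i
    using F1[OF j] i \<sigma>ne[OF j] by (simp add: field_simps)
  have nAu: "nrm m (mv (ctrans A) (u j)) = \<bar>\<sigma> j\<bar>" if j: "j < n" for j
  proof -
    have "nrm m (mv (ctrans A) (u j)) = nrm m (\<lambda>i. complex_of_real (\<sigma> j) * p j i)"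
      using F1[OF j] by (intro nrm_cong, auto)
    also have "\<dots> = \<bar>\<sigma> j\<bar>" unfolding nrm_scale using nrm_orth_one[OF onp] j nm by simp
    finally show ?thesis .
  qed
  have rp: "nrm m (\<lambda>i. r j i - p j i) \<le> \<tau>" if j: "j < n" for j
  proof -
    let ?Bq = "mv (ctrans B) (q j)" and ?Aq = "mv (ctrans A) (q j)" and ?Au = "mv (ctrans A) (u j)"
    have q1: "nrm n (q j) = 1" by (rule nrm_orth_one[OF onq j])
    have b1: "nrm m (\<lambda>i. ?Bq i - ?Aq i) \<le> \<tau> * f0 / 3"
    proof -
      have "(\<lambda>i. ?Bq i - ?Aq i) = mv (ctrans B - ctrans A) (q j)" using mv_mat_diff[OF cBc cAc] by simp
      moreover have "nrm m (mv (ctrans B - ctrans A) (q j)) \<le> \<delta> * (real m * real n) * nrm n (q j)"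
      proof (rule mv_bound)
        show "ctrans B - ctrans A \<in> carrier_mat m n" using cBc cAc unfolding carrier_mat_def by auto
        fix i k assume i: "i < m" and k: "k < n"
        have "(ctrans B - ctrans A) $$ (i,k) = cnj (B $$ (k,i)) - cnj (A $$ (k,i))"
          using cBc cAc Bc Ac i k by simp
        also have "cmod \<dots> = cmod (A $$ (k,i) - B $$ (k,i))" by (metis complex_cnj_diff complex_mod_cnj norm_minus_commute)
        also have "\<dots> \<le> \<delta>" using close i k by (simp add: less_imp_le)
        finally show "cmod ((ctrans B - ctrans A) $$ (i,k)) \<le> \<delta>" .
      qed
      ultimately show ?thesis using q1 d3 unfolding f0_def by simp
    qed
    have b2: "nrm m (\<lambda>i. ?Aq i - ?Au i) \<le> \<tau> * f0 / 3"
    proof -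
      have eqf: "(\<lambda>i. ?Aq i - ?Au i) = mv (ctrans A) (\<lambda>i. q j i - u j i)" by (simp add: mv_diff)
      have "nrm m (mv (ctrans A) (\<lambda>i. q j i - u j i)) \<le> cA * (real m * real n) * nrm n (\<lambda>i. q j i - u j i)"
      proof (rule mv_bound[OF cAc])
        fix i k assume i: "i < m" and k: "k < n"
        show "cmod (ctrans A $$ (i,k)) \<le> cA" using cA(2) Ac i k by simp
      qed
      moreover have "cA * (real m * real n) * nrm n (\<lambda>i. q j i - u j i) \<le> cA * (real m * real n) * \<theta>"
        using qu j cA(1) unfolding \<theta>_def by (intro mult_left_mono, auto)
      ultimately show ?thesis using k6 unfolding \<theta>def f0_def eqf by linarith
    qed
    have b3: "nrm m (\<lambda>i. ?Bq i - ?Au i) \<le> 2 * (\<tau> * f0 / 3)"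
      using nrm_tri3[of m ?Bq ?Au ?Aq] b1 b2 by linarith
    have fj: "f0 \<le> \<bar>f j\<bar>" using fge[OF j] .
    have fjpos: "0 < \<bar>f j\<bar>" using fj f0pos by linarith
    have "nrm m (\<lambda>i. r j i - p j i)
        = nrm m (\<lambda>i. complex_of_real (1 / f j) * (?Bq i - ?Au i) + complex_of_real (1 / f j - 1 / \<sigma> j) * ?Au i)"
      using pA[OF j] unfolding r_def by (intro nrm_cong, simp add: algebra_simps)
    also have "\<dots> \<le> nrm m (\<lambda>i. complex_of_real (1 / f j) * (?Bq i - ?Au i)) + nrm m (\<lambda>i. complex_of_real (1 / f j - 1 / \<sigma> j) * ?Au i)"
      by (rule nrm_triangle)
    also have "nrm m (\<lambda>i. complex_of_real (1 / f j) * (?Bq i - ?Au i)) = (1 / \<bar>f j\<bar>) * nrm m (\<lambda>i. ?Bq i - ?Au i)"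
      by (simp only: nrm_scale norm_of_real abs_divide abs_one)
    also have "nrm m (\<lambda>i. complex_of_real (1 / f j - 1 / \<sigma> j) * ?Au i) = \<bar>1 / f j - 1 / \<sigma> j\<bar> * \<bar>\<sigma> j\<bar>"
      by (simp only: nrm_scale norm_of_real nAu[OF j])
    also have "\<bar>1 / f j - 1 / \<sigma> j\<bar> * \<bar>\<sigma> j\<bar> = \<bar>\<sigma> j - f j\<bar> / \<bar>f j\<bar>"
      using fne[OF j] \<sigma>ne[OF j] by (simp add: field_simps abs_divide abs_mult[symmetric])
    finally have e: "nrm m (\<lambda>i. r j i - p j i) \<le> (1 / \<bar>f j\<bar>) * nrm m (\<lambda>i. ?Bq i - ?Au i) + \<bar>\<sigma> j - f j\<bar> / \<bar>f j\<bar>" .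
    have "\<bar>\<sigma> j - f j\<bar> \<le> \<tau> * f0 / 3" using \<sigma>f[OF j] k3 unfolding f0_def by linarith
    hence "(1 / \<bar>f j\<bar>) * nrm m (\<lambda>i. ?Bq i - ?Au i) + \<bar>\<sigma> j - f j\<bar> / \<bar>f j\<bar> \<le> (1 / \<bar>f j\<bar>) * (2 * (\<tau> * f0 / 3)) + (\<tau> * f0 / 3) / \<bar>f j\<bar>"
      using b3 fjpos by (intro add_mono divide_right_mono mult_left_mono, auto)
    also have "\<dots> = (\<tau> * f0) / \<bar>f j\<bar>" by (simp add: field_simps)
    also have "\<dots> \<le> (\<tau> * \<bar>f j\<bar>) / \<bar>f j\<bar>" using fj t1(1) fjpos by (intro divide_right_mono mult_left_mono, auto)
    also have "\<dots> = \<tau>" using fjpos by simp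
    finally show ?thesis using e by linarith
  qed
  define \<rho> where "\<rho> j = (if j < n then r j else p j)" for j
  have \<rho>p: "\<forall>j<m. nrm m (\<lambda>i. \<rho> j i - p j i) \<le> \<tau>"
  proof (intro allI impI)
    fix j assume j: "j < m"
    show "nrm m (\<lambda>i. \<rho> j i - p j i) \<le> \<tau>"
    proof (cases "j < n")
      case True thus ?thesis using rp unfolding \<rho>_def by simp
    next
      case False
      hence "nrm m (\<lambda>i. \<rho> j i - p j i) = 0" unfolding \<rho>_def nrm_zero_iff by simp
      thus ?thesis using t1 by simp
    qed
  qed
  have \<rho>on: "orthonormal m n \<rho>" using ron unfolding \<rho>_def orthonormal_def by simp
  obtain qR where onqR: "orthonormal m m qR" and qRp: "\<forall>j<m. nrm m (\<lambda>i. qR j i - p j i) \<le> CR * \<tau>"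
    and qRr: "\<forall>j<n. qR j = r j"
  proof -
    define E where "E = (\<lambda>(b::complex) (x::nat \<Rightarrow> complex). b = 0 \<or> (\<forall>i<m. x i = 0))"
    note G = CR(2)[unfolded gs_prop_def, THEN spec[of _ \<tau>], THEN spec[of _ \<rho>], THEN spec[of _ p],
        THEN spec[of _ E], THEN spec[of _ "\<lambda>_. 0"]]
    have t0: "0 \<le> \<tau>" using t1 by simp
    have Ew: "\<forall>j<m. E ((\<lambda>_. 0) j) (\<rho> j)" unfolding E_def by simp
    have E0: "\<forall>b. E b (\<lambda>i. 0)" unfolding E_def by simp
    have Eadd: "\<forall>b x y. E b x \<longrightarrow> E b y \<longrightarrow> E b (\<lambda>i. x i + y i)" unfolding E_def by auto
    have Ediff: "\<forall>b x y. E b x \<longrightarrow> E b y \<longrightarrow> E b (\<lambda>i. x i - y i)" unfolding E_def by auto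
    have Escale: "\<forall>b a x. E b x \<longrightarrow> E b (\<lambda>i. a * x i)" unfolding E_def by auto
    have Eorth: "\<forall>b b' x y. b \<noteq> b' \<longrightarrow> E b x \<longrightarrow> E b' y \<longrightarrow> ip m x y = 0"
      unfolding E_def ip_def by auto
    have "\<exists>q. orthonormal m m q \<and> (\<forall>j<m. E ((\<lambda>_. 0) j) (q j)) \<and>
          (\<forall>j<m. nrm m (\<lambda>i. q j i - p j i) \<le> CR * \<tau>) \<and>
          (\<forall>k\<le>m. orthonormal m k \<rho> \<longrightarrow> (\<forall>j<k. q j = \<rho> j))"
      by (rule G[THEN mp, THEN mp, THEN mp, THEN mp, THEN mp, THEN mp, THEN mp, THEN mp, THEN mp, THEN mp,
             OF t0 t1(2) onp \<rho>p Ew E0 Eadd Ediff Escale Eorth])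
    then obtain q where q: "orthonormal m m q" "\<forall>j<m. nrm m (\<lambda>i. q j i - p j i) \<le> CR * \<tau>"
      "\<forall>k\<le>m. orthonormal m k \<rho> \<longrightarrow> (\<forall>j<k. q j = \<rho> j)" by blast
    have "\<forall>j<n. q j = r j" using q(3) nm \<rho>on unfolding \<rho>_def by auto
    thus ?thesis using that q by blast
  qed
  define QL where "QL = matf n n q"
  define QR where "QR = matf m m qR"
  define F where "F = mat n m (\<lambda>(i,k). if i = k then complex_of_real (f i) else 0)"
  have QLu: "QL \<in> unitary_mat n" unfolding QL_def by (rule orthonormal_unitary[OF onq])
  have QRu: "QR \<in> unitary_mat m" unfolding QR_def by (rule orthonormal_unitary[OF onqR])
  have QLc: "QL \<in> carrier_mat n n" unfolding QL_def by simp
  have QRc: "QR \<in> carrier_mat m m" unfolding QR_def by simp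
  have Fc: "F \<in> carrier_mat n m" unfolding F_def by simp
  have Fd: "F \<in> real_diag_mat n m" unfolding real_diag_mat_def F_def by auto
  have cQRc: "ctrans QR \<in> carrier_mat m m" by (rule ctrans_carrier'[OF QRc])
  have cQLc: "ctrans QL \<in> carrier_mat n n" by (rule ctrans_carrier'[OF QLc])
  have FQ: "F * ctrans QR = ctrans QL * B"
  proof (rule eq_matI)
    fix j k assume j0: "j < dim_row (ctrans QL * B)" and k0: "k < dim_col (ctrans QL * B)"
    have j: "j < n" and k: "k < m" using j0 k0 cQLc Bc by auto
    have "(F * ctrans QR) $$ (j,k) = (\<Sum>l<m. F $$ (j,l) * ctrans QR $$ (l,k))" by (rule mult_entry[OF Fc cQRc j k])
    also have "\<dots> = (\<Sum>l<m. if l = j then complex_of_real (f j) * cnj (qR j k) else 0)"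
      using j k nm unfolding F_def QR_def by (intro sum.cong, auto)
    also have "\<dots> = complex_of_real (f j) * cnj (qR j k)" using j nm by simp
    also have "\<dots> = cnj (mv (ctrans B) (q j) k)" using qRr j fne[OF j] unfolding r_def by simp
    also have "\<dots> = (\<Sum>l<n. cnj (q j l) * B $$ (l,k))"
      using cBc Bc k unfolding mv_def by (simp add: mult.commute)
    also have "\<dots> = (\<Sum>l<n. ctrans QL $$ (j,l) * B $$ (l,k))"
      using j unfolding QL_def by (intro sum.cong, auto)
    also have "\<dots> = (ctrans QL * B) $$ (j,k)" by (rule mult_entry[OF cQLc Bc j k, symmetric])
    finally show "(F * ctrans QR) $$ (j,k) = (ctrans QL * B) $$ (j,k)" .
  qed (insert Fc cQRc cQLc Bc, auto)
  have Beq: "B = QL * F * ctrans QR"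
  proof -
    have "QL * F * ctrans QR = QL * (F * ctrans QR)" by (rule assoc_mult_mat[OF QLc Fc cQRc])
    also have "\<dots> = QL * (ctrans QL * B)" unfolding FQ ..
    also have "\<dots> = (QL * ctrans QL) * B" by (rule assoc_mult_mat[OF QLc cQLc Bc, symmetric])
    also have "QL * ctrans QL = 1\<^sub>m n" using QLu unfolding unitary_mat_def by simp
    finally show ?thesis using Bc by simp
  qed
  have cD: "\<forall>i<n. cmod (D $$ (i,i) - F $$ (i,i)) < \<epsilon>"
  proof (intro allI impI)
    fix i assume i: "i < n"
    have Dr: "D $$ (i,i) = complex_of_real (\<sigma> i)"
      using D i nm \<sigma>_def unfolding real_diag_mat_def by (simp add: complex_is_Real_iff complex_eq_iff)
    have "cmod (D $$ (i,i) - F $$ (i,i)) = \<bar>\<sigma> i - f i\<bar>"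
      using i nm Dr unfolding F_def by (simp add: of_real_diff[symmetric] del: of_real_diff)
    also have "\<dots> \<le> \<kappa> / sqrt m0" by (rule \<sigma>f[OF i])
    finally show "cmod (D $$ (i,i) - F $$ (i,i)) < \<epsilon>" using k2 by linarith
  qed
  have cQL: "\<forall>i<n. \<forall>j<n. cmod (QL $$ (i,j) - PL $$ (i,j)) < \<epsilon>"
  proof (intro allI impI)
    fix i j assume i: "i < n" and j: "j < n"
    have "cmod (QL $$ (i,j) - PL $$ (i,j)) = cmod (q j i - u j i)" using i j PLc unfolding QL_def u_def colf_def by simp
    also have "\<dots> \<le> nrm n (\<lambda>i. q j i - u j i)" by (rule coord_le_nrm[OF i])
    also have "\<dots> \<le> \<theta>" using qu j unfolding \<theta>_def by simp
    finally show "cmod (QL $$ (i,j) - PL $$ (i,j)) < \<epsilon>" using k5 unfolding \<theta>def by linarith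
  qed
  have cQR: "\<forall>i<m. \<forall>j<m. cmod (QR $$ (i,j) - PR $$ (i,j)) < \<epsilon>"
  proof (intro allI impI)
    fix i j assume i: "i < m" and j: "j < m"
    have "cmod (QR $$ (i,j) - PR $$ (i,j)) = cmod (qR j i - p j i)" using i j PRc unfolding QR_def p_def colf_def by simp
    also have "\<dots> \<le> nrm m (\<lambda>i. qR j i - p j i)" by (rule coord_le_nrm[OF i])
    also have "\<dots> \<le> CR * \<tau>" using qRp j by simp
    finally show "cmod (QR $$ (i,j) - PR $$ (i,j)) < \<epsilon>" using t1(3) by linarith
  qed
  show ?thesis using concl1 concl2 QLu QRu Fd Beq cD cQL cQR by blast
qed

theorem lemma4p5:
  fixes d1 d2 :: nat and ls :: "nat list" and A PL D PR :: "complex mat"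
  assumes "1 \<le> d1" and "d1 \<le> d2"
    and "1 \<le> length ls"
    and "\<forall>j<length ls. 1 \<le> ls ! j \<and> ls ! j \<le> d1"
    and "sum_list ls \<le> d1"
    and "A \<in> M_C d1 d2 ls"
    and "PL \<in> unitary_mat d1" and "PR \<in> unitary_mat d2" and "D \<in> real_diag_mat d1 d2"
    and "A = PL * D * ctrans PR"
    and "\<not> eigenvalue (A * ctrans A) 0"
    and "card {z. eigenvalue (A * ctrans A) z} = d1 - (\<Sum>j<length ls. ls ! j - 1)"
  shows "\<forall>\<epsilon>>0. \<exists>\<delta>>0. \<forall>B \<in> M_C d1 d2 ls.
           (\<forall>i<d1. \<forall>j<d2. cmod (A $$ (i,j) - B $$ (i,j)) < \<delta>) \<longrightarrow>
             \<not> eigenvalue (B * ctrans B) 0 \<and>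
             card {z. eigenvalue (B * ctrans B) z} = d1 - (\<Sum>j<length ls. ls ! j - 1) \<and>
             (\<exists>QL F QR. QL \<in> unitary_mat d1 \<and> QR \<in> unitary_mat d2 \<and> F \<in> real_diag_mat d1 d2 \<and>
                B = QL * F * ctrans QR \<and>
                (\<forall>i<d1. cmod (D $$ (i,i) - F $$ (i,i)) < \<epsilon>) \<and>
                (\<forall>i<d1. \<forall>j<d1. cmod (QL $$ (i,j) - PL $$ (i,j)) < \<epsilon>) \<and>
                (\<forall>i<d2. \<forall>j<d2. cmod (QR $$ (i,j) - PR $$ (i,j)) < \<epsilon>))"
proof -
  note as = assms
  define n where "n = d1"
  define m where "m = d2"
  have n1: "1 \<le> n" and nm: "n \<le> m" using as(1,2) unfolding n_def m_def by auto
  have pos: "\<forall>j<length ls. 1 \<le> ls ! j" using as(4) by auto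
  have Ac: "A \<in> carrier_mat n m" using as(6) unfolding M_C_def n_def m_def by simp
  have PL: "PL \<in> unitary_mat n" and PR: "PR \<in> unitary_mat m" and D: "D \<in> real_diag_mat n m"
    using as(7,8,9) unfolding n_def m_def by auto
  have AD: "A = PL * D * ctrans PR" by (rule as(10))
  define \<sigma> where "\<sigma> j = Re (D $$ (j,j))" for j
  define \<mu> where "\<mu> j = (\<sigma> j)\<^sup>2" for j
  define u where "u = colf PL"
  define p where "p = colf PR"
  have onu: "orthonormal n n u" unfolding u_def by (rule unitary_orthonormal[OF PL])
  define H where "H = A * ctrans A"
  have Hc: "H \<in> carrier_mat n n" unfolding H_def by (rule gram_carrier[OF Ac])
  have hermH: "ctrans H = H" unfolding H_def by (rule herm_gram[OF Ac])
  have eigH: "eig H (complex_of_real (\<mu> j)) (u j)" if j: "j < n" for j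
    unfolding eig_def
  proof (intro allI impI)
    fix i assume "i < dim_row H"
    hence i: "i < n" using Hc by simp
    have F1: "\<forall>i<m. mv (ctrans A) (u j) i = complex_of_real (\<sigma> j) * p j i"
      using svd_cols(1)[OF PL PR D nm AD j] unfolding u_def p_def \<sigma>_def by simp
    have F2: "\<forall>i<n. mv A (p j) i = complex_of_real (\<sigma> j) * u j i"
      using svd_cols(2)[OF PL PR D nm AD j] unfolding u_def p_def \<sigma>_def by simp
    have "mv H (u j) = mv A (mv (ctrans A) (u j))" unfolding H_def by (rule mv_mult[OF Ac ctrans_carrier'[OF Ac]])
    also have "\<dots> = mv A (\<lambda>i. complex_of_real (\<sigma> j) * p j i)" using F1 Ac by (intro mv_cong, auto)
    also have "\<dots> = (\<lambda>i. complex_of_real (\<sigma> j) * mv A (p j) i)" by (rule mv_scale)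
    finally have "mv H (u j) i = complex_of_real (\<sigma> j) * (complex_of_real (\<sigma> j) * u j i)" using F2 i by simp
    thus "mv H (u j) i = complex_of_real (\<mu> j) * u j i" unfolding \<mu>_def by (simp add: power2_eq_square)
  qed
  interpret sA: spec H n u \<mu> using Hc onu eigH by (unfold_locales, auto)
  have evs: "{z. eigenvalue H z} = (\<lambda>k. complex_of_real (\<mu> k)) ` {..<n}" by (rule sA.ev_set[OF hermH])
  have mupos: "0 < \<mu> j" if j: "j < n" for j
  proof -
    have "0 \<le> \<mu> j" unfolding \<mu>_def by simp
    moreover have "\<mu> j \<noteq> 0"
    proof
      assume "\<mu> j = 0"
      hence "eigenvalue H 0" using evs j by force
      thus False using as(11) unfolding H_def by simp
    qed
    ultimately show ?thesis by simp
  qed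
  have cardmu: "card (\<mu> ` {..<n}) = n - (\<Sum>j<length ls. ls ! j - 1)"
  proof -
    have "card (\<mu> ` {..<n}) = card (complex_of_real ` (\<mu> ` {..<n}))"
      by (rule card_image[symmetric], simp add: inj_on_def)
    also have "complex_of_real ` (\<mu> ` {..<n}) = {z. eigenvalue H z}" unfolding evs by auto
    finally show ?thesis using as(12) unfolding H_def n_def by simp
  qed
  define m0 where "m0 = Min (\<mu> ` {..<n})"
  have m0: "0 < m0" "\<forall>j<n. m0 \<le> \<mu> j"
  proof -
    have "0 \<in> {..<n}" using n1 by simp
    hence ne: "\<mu> ` {..<n} \<noteq> {}" by blast
    obtain j where "j < n" "m0 = \<mu> j" using Min_in[OF _ ne] unfolding m0_def by auto
    thus "0 < m0" using mupos by simp
    show "\<forall>j<n. m0 \<le> \<mu> j" unfolding m0_def by auto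
  qed
  define G where "G = (\<lambda>(i,j). \<bar>\<mu> i - \<mu> j\<bar>) ` {(i,j). i < n \<and> j < n \<and> \<mu> i \<noteq> \<mu> j}"
  define g where "g = Min (insert 1 G)"
  have finG: "finite G" unfolding G_def
    by (rule finite_imageI, rule finite_subset[of _ "{..<n} \<times> {..<n}"], auto)
  have g: "0 < g" "\<forall>i<n. \<forall>j<n. \<mu> i \<noteq> \<mu> j \<longrightarrow> g \<le> \<bar>\<mu> i - \<mu> j\<bar>"
  proof -
    have "g \<in> insert 1 G" unfolding g_def using finG by (intro Min_in, auto)
    thus "0 < g" unfolding G_def by auto
    show "\<forall>i<n. \<forall>j<n. \<mu> i \<noteq> \<mu> j \<longrightarrow> g \<le> \<bar>\<mu> i - \<mu> j\<bar>"
    proof (intro allI impI)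
      fix i j assume "i < n" "j < n" "\<mu> i \<noteq> \<mu> j"
      hence "\<bar>\<mu> i - \<mu> j\<bar> \<in> insert 1 G" unfolding G_def by force
      thus "g \<le> \<bar>\<mu> i - \<mu> j\<bar>" unfolding g_def using finG by (intro Min_le, auto)
    qed
  qed
  define cA where "cA = (\<Sum>i<n. \<Sum>k<m. cmod (A $$ (i,k)))"
  have cA: "0 \<le> cA" "\<forall>i<n. \<forall>k<m. cmod (A $$ (i,k)) \<le> cA"
  proof -
    show "0 \<le> cA" unfolding cA_def by (intro sum_nonneg, simp)
    show "\<forall>i<n. \<forall>k<m. cmod (A $$ (i,k)) \<le> cA"
    proof (intro allI impI)
      fix i k assume i: "i < n" and k: "k < m"
      have "cmod (A $$ (i,k)) \<le> (\<Sum>k<m. cmod (A $$ (i,k)))"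
        by (rule member_le_sum[of k "{..<m}" "\<lambda>k. cmod (A $$ (i,k))"], insert k, auto)
      also have "\<dots> \<le> cA" unfolding cA_def
        by (rule member_le_sum[of i "{..<n}" "\<lambda>i. \<Sum>k<m. cmod (A $$ (i,k))"], insert i, auto intro: sum_nonneg)
      finally show "cmod (A $$ (i,k)) \<le> cA" .
    qed
  qed
  obtain CL where CL: "0 < CL" "gs_prop CL n n" using gs by blast
  obtain CR where CR: "0 < CR" "gs_prop CR m m" using gs by blast
  show ?thesis
  proof (intro allI impI)
    fix \<epsilon> :: real assume \<epsilon>: "0 < \<epsilon>"
    define f0 where "f0 = sqrt (m0 / 2)"
    have f0: "0 < f0" unfolding f0_def using m0 by simp
    define \<tau> where "\<tau> = min (1 / CR) (\<epsilon> / (2 * CR))"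
    have t1: "0 < \<tau>" "CR * \<tau> \<le> 1" "CR * \<tau> < \<epsilon>"
    proof -
      show "0 < \<tau>" unfolding \<tau>_def using CR \<epsilon> by simp
      have "CR * \<tau> \<le> CR * (1 / CR)" unfolding \<tau>_def using CR by (intro mult_left_mono, auto)
      thus "CR * \<tau> \<le> 1" using CR by simp
      have "CR * \<tau> \<le> CR * (\<epsilon> / (2 * CR))" unfolding \<tau>_def using CR by (intro mult_left_mono, auto)
      thus "CR * \<tau> < \<epsilon>" using CR \<epsilon> by simp
    qed
    define T where "T = \<tau> * f0 / 3"
    have T: "0 < T" unfolding T_def using t1 f0 by simp
    define Ka where "Ka = cA * (real m * real n)"
    have Ka: "0 \<le> Ka" unfolding Ka_def using cA by simp
    have sm0: "0 < sqrt m0" using m0 by simp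
    define \<kappa> where "\<kappa> = min (g / 4) (min (m0 / 2) (min (sqrt m0 * \<epsilon> / 2) (min (sqrt m0 * T) (min (g / (2 * CL)) (min (g * \<epsilon> / (4 * CL)) (g * T / (2 * CL * (Ka + 1))))))))"
    have kl0: "\<kappa> \<le> g / 4" unfolding \<kappa>_def by (rule min.cobounded1)
    have kl1: "\<kappa> \<le> m0 / 2" unfolding \<kappa>_def by (rule min.coboundedI2, rule min.cobounded1)
    have kl2: "\<kappa> \<le> sqrt m0 * \<epsilon> / 2" unfolding \<kappa>_def by (rule min.coboundedI2, rule min.coboundedI2, rule min.cobounded1)
    have kl3: "\<kappa> \<le> sqrt m0 * T" unfolding \<kappa>_def by (rule min.coboundedI2, rule min.coboundedI2, rule min.coboundedI2, rule min.cobounded1)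
    have kl4: "\<kappa> \<le> g / (2 * CL)" unfolding \<kappa>_def by (rule min.coboundedI2, rule min.coboundedI2, rule min.coboundedI2, rule min.coboundedI2, rule min.cobounded1)
    have kl5: "\<kappa> \<le> g * \<epsilon> / (4 * CL)" unfolding \<kappa>_def by (rule min.coboundedI2, rule min.coboundedI2, rule min.coboundedI2, rule min.coboundedI2, rule min.coboundedI2, rule min.cobounded1)
    have kl6: "\<kappa> \<le> g * T / (2 * CL * (Ka + 1))" unfolding \<kappa>_def by (rule min.coboundedI2, rule min.coboundedI2, rule min.coboundedI2, rule min.coboundedI2, rule min.coboundedI2, rule min.coboundedI2, rule order_refl)
    note \<kappa>le = kl0 kl1 kl2 kl3 kl4 kl5 kl6
    have \<kappa>pos: "0 < \<kappa>" unfolding \<kappa>_def using g m0 sm0 \<epsilon> T CL Ka by simp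
    have k2: "\<kappa> / sqrt m0 < \<epsilon>"
    proof -
      have "\<kappa> / sqrt m0 \<le> \<epsilon> / 2" using \<kappa>le(3) sm0 by (simp add: pos_divide_le_eq mult.commute)
      thus ?thesis using \<epsilon> by linarith
    qed
    have k3: "\<kappa> / sqrt m0 \<le> \<tau> * sqrt (m0 / 2) / 3"
      using \<kappa>le(4) sm0 unfolding T_def f0_def by (simp add: pos_divide_le_eq mult.commute)
    have k4: "CL * (2 * \<kappa> / g) \<le> 1"
    proof -
      have "\<kappa> * (2 * CL) \<le> g" using \<kappa>le(5) CL by (simp add: pos_le_divide_eq)
      thus ?thesis using g(1) by (simp add: pos_divide_le_eq algebra_simps)
    qed
    have k5: "CL * (2 * \<kappa> / g) < \<epsilon>"
    proof -
      have "\<kappa> * (4 * CL) \<le> g * \<epsilon>" using \<kappa>le(6) CL by (simp add: pos_le_divide_eq)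
      hence "CL * (2 * \<kappa> / g) \<le> \<epsilon> / 2" using g(1) by (simp add: pos_divide_le_eq algebra_simps)
      thus ?thesis using \<epsilon> by linarith
    qed
    have k6: "cA * (real m * real n) * (CL * (2 * \<kappa> / g)) \<le> \<tau> * sqrt (m0 / 2) / 3"
    proof -
      have "\<kappa> * (2 * CL * (Ka + 1)) \<le> g * T" using \<kappa>le(7) CL Ka by (simp add: pos_le_divide_eq)
      hence "(Ka + 1) * (CL * (2 * \<kappa> / g)) \<le> T" using g(1) by (simp add: pos_divide_le_eq algebra_simps)
      moreover have "Ka * (CL * (2 * \<kappa> / g)) \<le> (Ka + 1) * (CL * (2 * \<kappa> / g))"
        using CL \<kappa>pos g(1) by (intro mult_right_mono, auto)
      ultimately show ?thesis unfolding Ka_def T_def f0_def by linarith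
    qed
    define \<delta> where "\<delta> = min 1 (min (\<kappa> / (real m * (2 * cA + 1) * (real n * real n))) (T / (real m * real n)))"
    have mpos: "0 < real m" and npos: "0 < real n" using n1 nm by auto
    have dl0: "\<delta> \<le> 1" unfolding \<delta>_def by (rule min.cobounded1)
    have dl1: "\<delta> \<le> \<kappa> / (real m * (2 * cA + 1) * (real n * real n))" unfolding \<delta>_def by (rule min.coboundedI2, rule min.cobounded1)
    have dl2: "\<delta> \<le> T / (real m * real n)" unfolding \<delta>_def by (rule min.coboundedI2, rule min.coboundedI2, rule order_refl)
    note \<delta>le = dl0 dl1 dl2
    have d1: "0 < \<delta>" unfolding \<delta>_def using \<kappa>pos T mpos npos cA by simp
    have d2: "real m * \<delta> * (2 * cA + 1) * (real n * real n) \<le> \<kappa>"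
    proof -
      have "\<delta> * (real m * (2 * cA + 1) * (real n * real n)) \<le> \<kappa>"
        using \<delta>le(2) mpos npos cA by (simp add: pos_le_divide_eq)
      thus ?thesis by (simp add: algebra_simps)
    qed
    have d3: "\<delta> * (real m * real n) \<le> \<tau> * sqrt (m0 / 2) / 3"
      using \<delta>le(3) mpos npos unfolding T_def f0_def by (simp add: pos_le_divide_eq)
    show "\<exists>\<delta>>0. \<forall>B \<in> M_C d1 d2 ls.
           (\<forall>i<d1. \<forall>j<d2. cmod (A $$ (i,j) - B $$ (i,j)) < \<delta>) \<longrightarrow>
             \<not> eigenvalue (B * ctrans B) 0 \<and>
             card {z. eigenvalue (B * ctrans B) z} = d1 - (\<Sum>j<length ls. ls ! j - 1) \<and>
             (\<exists>QL F QR. QL \<in> unitary_mat d1 \<and> QR \<in> unitary_mat d2 \<and> F \<in> real_diag_mat d1 d2 \<and>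
                B = QL * F * ctrans QR \<and>
                (\<forall>i<d1. cmod (D $$ (i,i) - F $$ (i,i)) < \<epsilon>) \<and>
                (\<forall>i<d1. \<forall>j<d1. cmod (QL $$ (i,j) - PL $$ (i,j)) < \<epsilon>) \<and>
                (\<forall>i<d2. \<forall>j<d2. cmod (QR $$ (i,j) - PR $$ (i,j)) < \<epsilon>))"
    proof (rule exI[of _ \<delta>], rule conjI[OF d1], intro ballI impI)
      fix B assume BM: "B \<in> M_C d1 d2 ls" and close: "\<forall>i<d1. \<forall>j<d2. cmod (A $$ (i,j) - B $$ (i,j)) < \<delta>"
      show "\<not> eigenvalue (B * ctrans B) 0 \<and>
             card {z. eigenvalue (B * ctrans B) z} = d1 - (\<Sum>j<length ls. ls ! j - 1) \<and>
             (\<exists>QL F QR. QL \<in> unitary_mat d1 \<and> QR \<in> unitary_mat d2 \<and> F \<in> real_diag_mat d1 d2 \<and>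
                B = QL * F * ctrans QR \<and>
                (\<forall>i<d1. cmod (D $$ (i,i) - F $$ (i,i)) < \<epsilon>) \<and>
                (\<forall>i<d1. \<forall>j<d1. cmod (QL $$ (i,j) - PL $$ (i,j)) < \<epsilon>) \<and>
                (\<forall>i<d2. \<forall>j<d2. cmod (QR $$ (i,j) - PR $$ (i,j)) < \<epsilon>))"
      proof -
        have sd: "\<forall>j. \<sigma> j = Re (D $$ (j,j))" unfolding \<sigma>_def by simp
        have md: "\<forall>j. \<mu> j = (\<sigma> j)\<^sup>2" unfolding \<mu>_def by simp
        have k1: "0 < \<kappa>" "\<kappa> \<le> g / 4" "\<kappa> \<le> m0 / 2" using \<kappa>pos \<kappa>le(1,2) by auto
        have BM': "B \<in> M_C n m ls" using BM unfolding n_def m_def .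
        have close': "\<forall>i<n. \<forall>j<m. cmod (A $$ (i,j) - B $$ (i,j)) < \<delta>" using close unfolding n_def m_def .
        show ?thesis
          using main_B[OF n1 nm pos Ac PL PR D AD sd md m0 g cardmu cA CL CR k1 k2 k3 k4 k5 k6 t1 d1 \<delta>le(1) d2 d3 BM' close']
          unfolding n_def m_def .
      qed
    qed
  qed
qed

end
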